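(* Let $\mathbb{K}$ be a field of characteristic different from $2$ and let $M\in M_n(\mathbb{K})$ have a fine Frobenius decomposition $M=\sum_{i=1}^s\gamma_iA_i-\sum_{j=1}^t\frac{\alpha_j}{n_j}B_j^2+\sum_{j=1}^tB_j$. Regard matrices as acting on $\overline{\mathbb{K}}^n$. Then: (a) $M$ is semisimple, nonzero, and its mutually distinct nonzero eigenvalues are $\gamma_1,\dots,\gamma_s$, $\alpha_1\pm\sqrt{-n_1},\dots,\alpha_t\pm\sqrt{-n_t}$. (b) $\overline{\mathbb{K}}^n=[\oplus_{i=1}^s Im(A_i)]\oplus[\oplus_{j=1}^t Im(B_j)]\oplus Ker(M)$, where for all $i,j$: $Im(A_i)=Ker(M-\gamma_iI_n)$; $Im(B_j)=Ker(M-(\alpha_j+\sqrt{-n_j})I_n)\oplus Ker(M-(\alpha_j-\sqrt{-n_j})I_n)$; $Ker(M)=[\cap_{i=1}^s Ker(A_i)]\cap[\cap_{j=1}^t Ker(B_j)]$; $Ker(M-(\alpha_j+\sqrt{-n_j})I_n)=Ker(B_j-\sqrt{-n_j}I_n)$; $Ker(M-(\alpha_j-\sqrt{-n_j})I_n)=Ker(B_j+\sqrt{-n_j}I_n)$. (c) For every $i$, $A_i$ acts as the identity on $Ker(M-\gamma_iI_n)$ and as the null map on every other eigenspace of $M$; hence $A_i$ is uniquely determined by $M$. (d) For every $j$, $B_j$ acts as multiplication by $\sqrt{-n_j}$ on $Ker(M-(\alpha_j+\sqrt{-n_j})I_n)$, as multiplication by $-\sqrt{-n_j}$ on $Ker(M-(\alpha_j-\sqrt{-n_j})I_n)$,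 and as the null map on every other eigenspace of $M$; hence $B_j$ is uniquely determined by $M$. (e) For every $j$, $\lambda_j=\alpha_j+\sqrt{-n_j}$ has degree $2$ over $\mathbb{K}$ and its conjugate is $\overline{\lambda}_j=\alpha_j-\sqrt{-n_j}$; hence $\alpha_j=H_\mathbb{K}(\lambda_j)$, $n_j=-V_\mathbb{K}(\lambda_j)^2$, and $M$ has splitting bound at most $2$ over $\mathbb{K}$.
   Context: A fine Frobenius decomposition of $M\in M_n(\mathbb{K})$ is a decomposition $M=\sum_{i=1}^s\gamma_iA_i-\sum_{j=1}^t\frac{\alpha_j}{n_j}B_j^2+\sum_{j=1}^tB_j$ where $A_1,\dots,A_s,B_1,\dots,B_t$ is a non-empty family of nonzero matrices in $M_n(\mathbb{K})$ and, for all indices: $\gamma_i,\alpha_j,n_j\in\mathbb{K}$ with $\sqrt{-n_j}\notin\mathbb{K}$ ($\sqrt{-n_j}$ a fixed root in $\overline{\mathbb{K}}$ of $X^2+n_j$); $\gamma_i\neq0$ and $\gamma_i\neq\gamma_h$ for $i\ne h$; $\alpha_j+\sqrt{-n_j}\neq\alpha_l\pm\sqrt{-n_l}$ for $j\neq l$; $A_iA_h=\delta_{ih}A_i$; $A_iB_j=B_jA_i=0$; $B_jB_l=0$ for $j\ne l$; $B_j^3=-n_jB_j$. For $\lambda\in\overline{\mathbb{K}}$ whose degree over $\mathbb{K}$ is not a multiple of $char(\mathbb{K})$, with monic minimal polynomial $X^d+a_{d-1}X^{d-1}+\cdots+a_0$, $H_\mathbb{K}(\lambda)=-a_{d-1}/d$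 and $V_\mathbb{K}(\lambda)=\lambda-H_\mathbb{K}(\lambda)$. The splitting bound over $\mathbb{K}$ of $M$ is the maximum degree of the irreducible factors over $\mathbb{K}$ of its minimal polynomial. *)

theory Defs
  imports "HOL-Analysis.Analysis" "HOL-Algebra.Algebraic_Closure_Type"
begin

(* Matrices in M_n(K) are rendered as 'a^'n^'n (n = CARD('n));
   the algebraic closure of K is the type 'k alg_closure with embedding to_ac. *)

definition ext_mat :: "'k::field ^'n^'n \<Rightarrow> 'k alg_closure ^'n^'n" where
  "ext_mat M = map_matrix to_ac M"

definition scal_mat :: "'a::semiring_1 \<Rightarrow> 'a^'n^'m \<Rightarrow> 'a^'n^'m" where
  "scal_mat c M = map_matrix (\<lambda>x. c * x) M"

definition mat_pow :: "'a::semiring_1 ^'n^'n \<Rightarrow> nat \<Rightarrow> 'a^'n^'n" where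
  "mat_pow M k = (((**) M) ^^ k) (mat 1)"

definition poly_mat :: "'a::comm_ring_1 poly \<Rightarrow> 'a^'n^'n \<Rightarrow> 'a^'n^'n" where
  "poly_mat p M = (\<Sum>i\<le>Polynomial.degree p. scal_mat (Polynomial.coeff p i) (mat_pow M i))"

definition min_poly_mat :: "'a::field ^'n^'n \<Rightarrow> 'a poly" where
  "min_poly_mat M = (THE p::_ poly. Polynomial.lead_coeff p = 1 \<and> poly_mat p M = 0 \<and>
     (\<forall>q. q \<noteq> 0 \<and> poly_mat q M = 0 \<longrightarrow> Polynomial.degree p \<le> Polynomial.degree q))"

definition splitting_bound :: "'a::field ^'n^'n \<Rightarrow> nat" where
  "splitting_bound M = Max {Polynomial.degree p | p. Factorial_Ring.irreducible p \<and> p dvd min_poly_mat M}"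

definition alg_min_poly :: "'k::field alg_closure \<Rightarrow> 'k poly" where
  "alg_min_poly x = (THE p::_ poly. Polynomial.lead_coeff p = 1 \<and> poly (map_poly to_ac p) x = 0 \<and>
     (\<forall>q. q \<noteq> 0 \<and> poly (map_poly to_ac q) x = 0 \<longrightarrow> Polynomial.degree p \<le> Polynomial.degree q))"

definition alg_degree :: "'k::field alg_closure \<Rightarrow> nat" where
  "alg_degree x = Polynomial.degree (alg_min_poly x)"

definition H_K :: "'k::field alg_closure \<Rightarrow> 'k" where
  "H_K x = - Polynomial.coeff (alg_min_poly x) (alg_degree x - 1) / of_nat (alg_degree x)"

definition V_K :: "'k::field alg_closure \<Rightarrow> 'k alg_closure" where
  "V_K x = x - to_ac (H_K x)"

definition ker_mat :: "'a::semiring_1 ^'n^'m \<Rightarrow> ('a^'n) set" where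
  "ker_mat A = {v. A *v v = 0}"

definition im_mat :: "'a::semiring_1 ^'n^'m \<Rightarrow> ('a^'m) set" where
  "im_mat A = range (\<lambda>v. A *v v)"

definition is_eigenvalue :: "'a::field ^'n^'n \<Rightarrow> 'a \<Rightarrow> bool" where
  "is_eigenvalue A \<mu> \<longleftrightarrow> (\<exists>v. v \<noteq> 0 \<and> A *v v = \<mu> *s v)"

definition eigenspace :: "'a::field ^'n^'n \<Rightarrow> 'a \<Rightarrow> ('a^'n) set" where
  "eigenspace A \<mu> = ker_mat (A - mat \<mu>)"

definition diagonalizable_mat :: "'a::field ^'n^'n \<Rightarrow> bool" where
  "diagonalizable_mat A \<longleftrightarrow> (\<exists>(P::'a^'n^'n) d. invertible P \<and> A ** P = P ** (\<chi> i j. if i = j then d i else 0))"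

definition semisimple :: "'k::field ^'n^'n \<Rightarrow> bool" where
  "semisimple M \<longleftrightarrow> diagonalizable_mat (ext_mat M)"

definition is_direct_sum :: "'i set \<Rightarrow> ('i \<Rightarrow> ('a::ab_group_add) set) \<Rightarrow> 'a set \<Rightarrow> bool" where
  "is_direct_sum I W V \<longleftrightarrow> finite I \<and>
     (\<forall>f \<in> PiE I W. sum f I \<in> V) \<and>
     (\<forall>v \<in> V. \<exists>!f. f \<in> PiE I W \<and> v = sum f I)"

text \<open>Fine Frobenius decomposition with data s, gamma, A, t, alpha, nn (= n_j), r (= chosen sqrt(-n_j)), B;
  indices are i < s and j < t.\<close>
definition fine_frobenius ::
  "'k::field ^'n^'n \<Rightarrow> nat \<Rightarrow> (nat \<Rightarrow> 'k) \<Rightarrow> (nat \<Rightarrow> 'k^'n^'n) \<Rightarrow>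
   nat \<Rightarrow> (nat \<Rightarrow> 'k) \<Rightarrow> (nat \<Rightarrow> 'k) \<Rightarrow> (nat \<Rightarrow> 'k alg_closure) \<Rightarrow> (nat \<Rightarrow> 'k^'n^'n) \<Rightarrow> bool" where
  "fine_frobenius M s \<gamma> A t \<alpha> nn r B \<longleftrightarrow>
     0 < s + t \<and>
     (\<forall>i<s. A i \<noteq> 0) \<and> (\<forall>j<t. B j \<noteq> 0) \<and>
     (\<forall>j<t. r j ^ 2 = - to_ac (nn j) \<and> r j \<notin> range to_ac) \<and>
     (\<forall>i<s. \<gamma> i \<noteq> 0) \<and>
     (\<forall>i<s. \<forall>h<s. i \<noteq> h \<longrightarrow> \<gamma> i \<noteq> \<gamma> h) \<and>
     (\<forall>j<t. \<forall>l<t. j \<noteq> l \<longrightarrow>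
        to_ac (\<alpha> j) + r j \<noteq> to_ac (\<alpha> l) + r l \<and> to_ac (\<alpha> j) + r j \<noteq> to_ac (\<alpha> l) - r l) \<and>
     (\<forall>i<s. \<forall>h<s. A i ** A h = (if i = h then A i else 0)) \<and>
     (\<forall>i<s. \<forall>j<t. A i ** B j = 0 \<and> B j ** A i = 0) \<and>
     (\<forall>j<t. \<forall>l<t. j \<noteq> l \<longrightarrow> B j ** B l = 0) \<and>
     (\<forall>j<t. B j ** B j ** B j = - scal_mat (nn j) (B j)) \<and>
     M = (\<Sum>i<s. scal_mat (\<gamma> i) (A i)) - (\<Sum>j<t. scal_mat (\<alpha> j / nn j) (B j ** B j))
         + (\<Sum>j<t. B j)"

definition frob_ev :: "(nat \<Rightarrow> 'k::field) \<Rightarrow> (nat \<Rightarrow> 'k) \<Rightarrow> (nat \<Rightarrow> 'k alg_closure) \<Rightarrow>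
    nat + nat \<times> bool \<Rightarrow> 'k alg_closure" where
  "frob_ev \<gamma> \<alpha> r x = (case x of Inl i \<Rightarrow> to_ac (\<gamma> i)
       | Inr (j, b) \<Rightarrow> (if b then to_ac (\<alpha> j) + r j else to_ac (\<alpha> j) - r j))"

definition frob_space :: "'k::field ^'n^'n \<Rightarrow> (nat \<Rightarrow> 'k^'n^'n) \<Rightarrow> (nat \<Rightarrow> 'k^'n^'n) \<Rightarrow>
    (nat + nat) option \<Rightarrow> ('k alg_closure ^'n) set" where
  "frob_space M A B x = (case x of None \<Rightarrow> ker_mat (ext_mat M)
       | Some (Inl i) \<Rightarrow> im_mat (ext_mat (A i))
       | Some (Inr j) \<Rightarrow> im_mat (ext_mat (B j)))"

end

theory Submission
  imports Defs
begin

lemma mv_smult: "(A::'a::field^'n^'m) *v (c *s x) = c *s (A *v x)"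
  by (simp add: matrix_vector_mult_def vec_eq_iff sum_distrib_left mult.left_commute)
lemma mv_sum: "finite I \<Longrightarrow> (A::'a::field^'n^'m) *v (\<Sum>i\<in>I. f i) = (\<Sum>i\<in>I. A *v f i)"
  by (induction I rule: finite_induct) (auto simp: algebra_simps)
lemma sum_mv: "finite I \<Longrightarrow> (\<Sum>i\<in>I. (f i::'a::field^'n^'m)) *v x = (\<Sum>i\<in>I. f i *v x)"
  by (induction I rule: finite_induct) (auto simp: algebra_simps)
lemma scal_mat_mv: "scal_mat c (A::'a::field^'n^'m) *v x = c *s (A *v x)"
  by (simp add: scal_mat_def matrix_vector_mult_def vec_eq_iff sum_distrib_left mult.assoc)
lemma mat_mv: "mat c *v (x::'a::field^'n) = c *s x"
  by (simp add: mat_def matrix_vector_mult_def vec_eq_iff if_distrib if_distribR cong: if_cong)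
lemma neg_mv: "(- A::'a::field^'n^'m) *v x = - (A *v x)"
  by (simp add: matrix_vector_mult_def vec_eq_iff sum_negf)
lemma sum_single: "finite S \<Longrightarrow> j \<in> S \<Longrightarrow> (\<And>l. l \<in> S \<Longrightarrow> l \<noteq> j \<Longrightarrow> f l = 0) \<Longrightarrow> sum f S = f j"
  by (metis sum.remove sum.neutral add_0_right DiffE singletonI)
lemma sum_zero': "(\<And>l. l \<in> S \<Longrightarrow> f l = 0) \<Longrightarrow> sum f S = 0" by simp

locale fvec =
  fixes M :: "'a::field^'n^'n" and s :: nat and \<gamma> :: "nat \<Rightarrow> 'a" and A :: "nat \<Rightarrow> 'a^'n^'n"
    and t :: nat and \<alpha> nn :: "nat \<Rightarrow> 'a" and B :: "nat \<Rightarrow> 'a^'n^'n"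
  assumes AA: "\<And>i h x. i<s \<Longrightarrow> h<s \<Longrightarrow> A i *v (A h *v x) = (if i = h then A i *v x else 0)"
    and AB: "\<And>i j x. i<s \<Longrightarrow> j<t \<Longrightarrow> A i *v (B j *v x) = 0"
    and BA: "\<And>i j x. i<s \<Longrightarrow> j<t \<Longrightarrow> B j *v (A i *v x) = 0"
    and BB: "\<And>j l x. j<t \<Longrightarrow> l<t \<Longrightarrow> j \<noteq> l \<Longrightarrow> B j *v (B l *v x) = 0"
    and BBB: "\<And>j x. j<t \<Longrightarrow> B j *v (B j *v (B j *v x)) = (- nn j) *s (B j *v x)"
    and nn0: "\<And>j. j<t \<Longrightarrow> nn j \<noteq> 0"
    and Mv: "\<And>x. M *v x = (\<Sum>i<s. \<gamma> i *s (A i *v x)) - (\<Sum>j<t. (\<alpha> j / nn j) *s (B j *v (B j *v x)))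
                + (\<Sum>j<t. B j *v x)"
begin

lemma AM: "i<s \<Longrightarrow> A i *v (M *v v) = \<gamma> i *s (A i *v v)"
proof -
  assume i: "i<s"
  have "A i *v (M *v v) = (\<Sum>h<s. \<gamma> h *s (A i *v (A h *v v))) - (\<Sum>j<t. (\<alpha> j / nn j) *s (A i *v (B j *v (B j *v v))))
                + (\<Sum>j<t. A i *v (B j *v v))"
    by (simp add: Mv mv_sum mv_smult matrix_vector_mult_diff_distrib matrix_vector_right_distrib)
  also have "\<dots> = (\<Sum>h<s. \<gamma> h *s (A i *v (A h *v v)))"
    using i by (simp add: AB)
  also have "\<dots> = \<gamma> i *s (A i *v v)"
    by (subst sum_single[of _ i]) (use i in \<open>auto simp: AA\<close>)
  finally show ?thesis .
qed

lemma BM: "j<t \<Longrightarrow> B j *v (M *v v) = \<alpha> j *s (B j *v v) + B j *v (B j *v v)"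
proof -
  assume j: "j<t"
  have "B j *v (M *v v) = (\<Sum>h<s. \<gamma> h *s (B j *v (A h *v v))) - (\<Sum>l<t. (\<alpha> l / nn l) *s (B j *v (B l *v (B l *v v))))
                + (\<Sum>l<t. B j *v (B l *v v))"
    by (simp add: Mv mv_sum mv_smult matrix_vector_mult_diff_distrib matrix_vector_right_distrib)
  also have "\<dots> = - ((\<alpha> j / nn j) *s (B j *v (B j *v (B j *v v)))) + B j *v (B j *v v)"
    apply (simp add: BA j)
    apply (subst sum_single[of _ j], simp, simp add: j, simp add: BB j)
    apply (subst sum_single[of _ j], simp, simp add: j, simp add: BB j)
    apply simp
    done
  also have "\<dots> = \<alpha> j *s (B j *v v) + B j *v (B j *v v)"
    using nn0[OF j] by (simp add: BBB j vector_smult_assoc)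
  finally show ?thesis .
qed

end

locale fvec_r = fvec +
  fixes r :: "nat \<Rightarrow> 'a::field"
  assumes r2: "\<And>j. j<t \<Longrightarrow> r j ^ 2 = - nn j"
    and two: "(2::'a) \<noteq> 0"
    and g0: "\<And>i. i<s \<Longrightarrow> \<gamma> i \<noteq> 0"
    and gg: "\<And>i h. i<s \<Longrightarrow> h<s \<Longrightarrow> i \<noteq> h \<Longrightarrow> \<gamma> i \<noteq> \<gamma> h"
    and gp: "\<And>i j. i<s \<Longrightarrow> j<t \<Longrightarrow> \<gamma> i \<noteq> \<alpha> j + r j"
    and gm: "\<And>i j. i<s \<Longrightarrow> j<t \<Longrightarrow> \<gamma> i \<noteq> \<alpha> j - r j"
    and p0: "\<And>j. j<t \<Longrightarrow> \<alpha> j + r j \<noteq> 0"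
    and m0: "\<And>j. j<t \<Longrightarrow> \<alpha> j - r j \<noteq> 0"
    and pp: "\<And>j l. j<t \<Longrightarrow> l<t \<Longrightarrow> j \<noteq> l \<Longrightarrow> \<alpha> j + r j \<noteq> \<alpha> l + r l"
    and pm: "\<And>j l. j<t \<Longrightarrow> l<t \<Longrightarrow> j \<noteq> l \<Longrightarrow> \<alpha> j + r j \<noteq> \<alpha> l - r l"
    and mm: "\<And>j l. j<t \<Longrightarrow> l<t \<Longrightarrow> j \<noteq> l \<Longrightarrow> \<alpha> j - r j \<noteq> \<alpha> l - r l"
begin

lemma r0: "j<t \<Longrightarrow> r j \<noteq> 0"
  using r2 nn0 by fastforce

lemma pm_self: "j<t \<Longrightarrow> \<alpha> j + r j \<noteq> \<alpha> j - r j"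
proof
  assume j: "j<t" and "\<alpha> j + r j = \<alpha> j - r j"
  then have "2 * r j = 0" by (simp add: algebra_simps)
  with two r0[OF j] show False by simp
qed

lemma A_eig_ne: "M *v v = \<mu> *s v \<Longrightarrow> i<s \<Longrightarrow> \<mu> \<noteq> \<gamma> i \<Longrightarrow> A i *v v = 0"
proof -
  assume e: "M *v v = \<mu> *s v" and i: "i<s" and ne: "\<mu> \<noteq> \<gamma> i"
  have "\<gamma> i *s (A i *v v) = \<mu> *s (A i *v v)" using AM[OF i, of v] e by (metis mv_smult)
  then have "(\<gamma> i - \<mu>) *s (A i *v v) = 0" by (simp add: vector_sub_rdistrib)
  with ne show ?thesis by simp
qed

lemma B_eig_ne: "M *v v = \<mu> *s v \<Longrightarrow> j<t \<Longrightarrow> \<mu> \<noteq> \<alpha> j + r j \<Longrightarrow> \<mu> \<noteq> \<alpha> j - r j \<Longrightarrow> B j *v v = 0"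
proof -
  assume e: "M *v v = \<mu> *s v" and j: "j<t" and n1: "\<mu> \<noteq> \<alpha> j + r j" and n2: "\<mu> \<noteq> \<alpha> j - r j"
  define w where "w = B j *v v"
  have Bw: "B j *v w = (\<mu> - \<alpha> j) *s w"
    using BM[OF j, of v] e unfolding w_def by (simp add: mv_smult vector_sub_rdistrib)
  have "B j *v (B j *v w) = (- nn j) *s w" unfolding w_def by (rule BBB[OF j])
  moreover have "B j *v (B j *v w) = ((\<mu> - \<alpha> j) * (\<mu> - \<alpha> j)) *s w"
    by (simp only: Bw mv_smult vector_smult_assoc)
  ultimately have "((\<mu> - \<alpha> j) * (\<mu> - \<alpha> j) + nn j) *s w = 0"
    by (simp add: vector_sadd_rdistrib)
  moreover have "(\<mu> - \<alpha> j) * (\<mu> - \<alpha> j) + nn j = (\<mu> - (\<alpha> j + r j)) * (\<mu> - (\<alpha> j - r j))"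
    using r2[OF j] by (simp add: algebra_simps power2_eq_square)
  ultimately show ?thesis using n1 n2 unfolding w_def by simp
qed

lemma A_eig: assumes e: "M *v v = \<mu> *s v" and i: "i<s"
  shows "A i *v v = (if \<mu> = \<gamma> i then v else 0)"
proof (cases "\<mu> = \<gamma> i")
  case False thus ?thesis using A_eig_ne[OF e i] by simp
next
  case True
  have Ah: "A h *v v = 0" if "h<s" "h \<noteq> i" for h
    using A_eig_ne[OF e that(1)] gg[OF that(1) i that(2)] True by simp
  have Bj: "B j *v v = 0" if "j<t" for j
    using B_eig_ne[OF e that] gp[OF i that] gm[OF i that] True by simp
  have "M *v v = (\<Sum>h<s. \<gamma> h *s (A h *v v))"
    by (simp add: Mv Bj)
  also have "\<dots> = \<gamma> i *s (A i *v v)"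
    by (subst sum_single[of _ i]) (use i Ah in auto)
  finally have "\<gamma> i *s v = \<gamma> i *s (A i *v v)" using e True by simp
  with g0[OF i] True show ?thesis by simp
qed

lemma B_eig_p: assumes e: "M *v v = (\<alpha> j + r j) *s v" and j: "j<t"
  shows "B j *v v = r j *s v"
proof -
  have Ai: "A i *v v = 0" if "i<s" for i
    using A_eig_ne[OF e that] gp[OF that j] by metis
  have Bl: "B l *v v = 0" if "l<t" "l \<noteq> j" for l
    using B_eig_ne[OF e that(1)] pp[OF j that(1)] pm[OF j that(1)] that(2) by metis
  define w where "w = B j *v v"
  have Bw: "B j *v w = r j *s w"
    using BM[OF j, of v] e unfolding w_def by (simp add: mv_smult algebra_simps vector_sadd_rdistrib)
  have "M *v v = - ((\<alpha> j / nn j) *s (B j *v (B j *v v))) + B j *v v"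
    apply (simp add: Mv Ai)
    apply (subst sum_single[of _ j], simp, simp add: j, simp add: Bl)
    apply (subst sum_single[of _ j], simp, simp add: j, simp add: Bl)
    apply simp
    done
  also have "\<dots> = (1 - \<alpha> j * r j / nn j) *s w"
    unfolding w_def[symmetric] Bw by (simp add: vector_smult_assoc vector_sub_rdistrib)
  finally have "(\<alpha> j + r j) *s v = (1 - \<alpha> j * r j / nn j) *s w" using e by simp
  then have vw: "v = ((1 - \<alpha> j * r j / nn j) / (\<alpha> j + r j)) *s w"
    using p0[OF j] by (metis (no_types, lifting) divide_inverse_commute vector_mul_lcancel vector_smult_assoc mult.commute right_inverse vector_smult_lid)
  have "B j *v v = ((1 - \<alpha> j * r j / nn j) / (\<alpha> j + r j)) *s (r j *s w)" by (subst vw) (simp only: mv_smult Bw)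
  also have "\<dots> = r j *s (((1 - \<alpha> j * r j / nn j) / (\<alpha> j + r j)) *s w)" by (simp only: vector_smult_assoc mult.commute)
  finally show ?thesis using vw by simp
qed

lemma B_eig_m: assumes e: "M *v v = (\<alpha> j - r j) *s v" and j: "j<t"
  shows "B j *v v = (- r j) *s v"
proof -
  have Ai: "A i *v v = 0" if "i<s" for i
    using A_eig_ne[OF e that] gm[OF that j] by metis
  have Bl: "B l *v v = 0" if "l<t" "l \<noteq> j" for l
    using B_eig_ne[OF e that(1)] pm[OF that(1) j] mm[OF j that(1)] that(2) by metis
  define w where "w = B j *v v"
  have Bw: "B j *v w = (- r j) *s w"
    using BM[OF j, of v] e unfolding w_def by (simp add: mv_smult algebra_simps vector_sadd_rdistrib vector_sub_rdistrib vector_smult_lneg eq_neg_iff_add_eq_0)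
  have "M *v v = - ((\<alpha> j / nn j) *s (B j *v (B j *v v))) + B j *v v"
    apply (simp add: Mv Ai)
    apply (subst sum_single[of _ j], simp, simp add: j, simp add: Bl)
    apply (subst sum_single[of _ j], simp, simp add: j, simp add: Bl)
    apply simp
    done
  also have "\<dots> = (1 + \<alpha> j * r j / nn j) *s w"
    unfolding w_def[symmetric] Bw by (simp add: mv_smult vector_smult_assoc vector_sadd_rdistrib vector_smult_lneg)
  finally have "(\<alpha> j - r j) *s v = (1 + \<alpha> j * r j / nn j) *s w" using e by simp
  then have vw: "v = ((1 + \<alpha> j * r j / nn j) / (\<alpha> j - r j)) *s w"
    using m0[OF j] by (metis (no_types, lifting) divide_inverse_commute vector_mul_lcancel vector_smult_assoc mult.commute right_inverse vector_smult_lid)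
  have "B j *v v = ((1 + \<alpha> j * r j / nn j) / (\<alpha> j - r j)) *s ((- r j) *s w)" by (subst vw) (simp only: mv_smult Bw)
  also have "\<dots> = (- r j) *s (((1 + \<alpha> j * r j / nn j) / (\<alpha> j - r j)) *s w)" by (simp only: vector_smult_assoc mult.commute)
  finally show ?thesis using vw by simp
qed

lemma B_eig: assumes e: "M *v v = \<mu> *s v" and j: "j<t"
  shows "B j *v v = (if \<mu> = \<alpha> j + r j then r j *s v else if \<mu> = \<alpha> j - r j then (- r j) *s v else 0)"
  using B_eig_p[of v j] B_eig_m[of v j] B_eig_ne[OF e j] e j by auto

end

lemma mv_neg: "(A::'a::field^'n^'m) *v (- x) = - (A *v x)"
  by (simp add: matrix_vector_mult_def vec_eq_iff sum_negf)

context fvec begin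

definition "Pj j v = (- 1 / nn j) *s (B j *v (B j *v v))"
definition "Zv v = v - (\<Sum>i<s. A i *v v) - (\<Sum>j<t. Pj j v)"

lemma A_Pj: "i<s \<Longrightarrow> j<t \<Longrightarrow> A i *v Pj j v = 0"
  by (simp add: Pj_def mv_neg mv_smult AB)

lemma B_Pj: "l<t \<Longrightarrow> j<t \<Longrightarrow> B l *v Pj j v = (if l = j then B j *v v else 0)"
  using nn0[of j] by (auto simp: Pj_def mv_neg mv_smult BB BBB vector_smult_assoc)

lemma BB_Pj: "j<t \<Longrightarrow> B j *v (B j *v Pj j v) = (- nn j) *s Pj j v"
  using nn0[of j] by (auto simp: Pj_def mv_neg mv_smult BBB vector_smult_assoc)

lemma A_Zv: "i<s \<Longrightarrow> A i *v Zv v = 0"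
proof -
  assume i: "i<s"
  have "A i *v Zv v = A i *v v - (\<Sum>h<s. A i *v (A h *v v)) - (\<Sum>j<t. A i *v Pj j v)"
    by (simp add: Zv_def matrix_vector_mult_diff_distrib mv_sum)
  also have "(\<Sum>h<s. A i *v (A h *v v)) = A i *v v"
    by (subst sum_single[of _ i]) (use i in \<open>auto simp: AA\<close>)
  also have "(\<Sum>j<t. A i *v Pj j v) = 0" using i by (simp add: A_Pj)
  finally show ?thesis by simp
qed

lemma B_Zv: "j<t \<Longrightarrow> B j *v Zv v = 0"
proof -
  assume j: "j<t"
  have "B j *v Zv v = B j *v v - (\<Sum>h<s. B j *v (A h *v v)) - (\<Sum>l<t. B j *v Pj l v)"
    by (simp add: Zv_def matrix_vector_mult_diff_distrib mv_sum)
  also have "(\<Sum>l<t. B j *v Pj l v) = B j *v v"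
    by (subst sum_single[of _ j]) (use j in \<open>auto simp: B_Pj\<close>)
  also have "(\<Sum>h<s. B j *v (A h *v v)) = 0" using j by (simp add: BA)
  finally show ?thesis by simp
qed

lemma ker_all: "(\<And>i. i<s \<Longrightarrow> A i *v x = 0) \<Longrightarrow> (\<And>j. j<t \<Longrightarrow> B j *v x = 0) \<Longrightarrow> M *v x = 0"
  by (simp add: Mv)

lemma M_Zv: "M *v Zv v = 0"
  by (rule ker_all) (simp_all add: A_Zv B_Zv)

lemma MA: "i<s \<Longrightarrow> M *v (A i *v w) = \<gamma> i *s (A i *v w)"
proof -
  assume i: "i<s"
  have "M *v (A i *v w) = (\<Sum>h<s. \<gamma> h *s (A h *v (A i *v w)))"
    using i by (simp add: Mv BA)
  also have "\<dots> = \<gamma> i *s (A i *v w)"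
    by (subst sum_single[of _ i]) (use i in \<open>auto simp: AA\<close>)
  finally show ?thesis .
qed

lemma decomp: "v = (\<Sum>i<s. A i *v v) + (\<Sum>j<t. Pj j v) + Zv v"
  by (simp add: Zv_def)

end

context fvec_r begin

definition "Xp j v = (1 / (2 * r j)) *s (B j *v v + r j *s Pj j v)"
definition "Xm j v = (1 / (2 * r j)) *s (r j *s Pj j v - B j *v v)"

lemma nn_r: "j<t \<Longrightarrow> nn j = - (r j * r j)"
  using r2[of j] by (simp add: power2_eq_square)

lemma BPjj: "j<t \<Longrightarrow> B j *v Pj j v = B j *v v" using B_Pj[of j j v] by simp

lemma BBv: "j<t \<Longrightarrow> B j *v (B j *v v) = (r j * r j) *s Pj j v"
  using nn0[of j] by (simp add: Pj_def vector_smult_assoc nn_r)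

lemma B_Xp: "j<t \<Longrightarrow> B j *v Xp j v = r j *s Xp j v"
proof -
  assume j: "j<t"
  have "B j *v Xp j v = (1 / (2 * r j)) *s ((r j * r j) *s Pj j v + r j *s (B j *v v))"
    by (simp only: Xp_def mv_smult matrix_vector_right_distrib BPjj[OF j] BBv[OF j])
  also have "\<dots> = r j *s Xp j v"
    unfolding Xp_def by (simp only: vector_add_ldistrib vector_smult_assoc) (simp add: mult_ac add.commute)
  finally show ?thesis .
qed

lemma B_Xm: "j<t \<Longrightarrow> B j *v Xm j v = (- r j) *s Xm j v"
proof -
  assume j: "j<t"
  have "B j *v Xm j v = (1 / (2 * r j)) *s (r j *s (B j *v v) - (r j * r j) *s Pj j v)"
    by (simp only: Xm_def mv_smult matrix_vector_mult_diff_distrib BPjj[OF j] BBv[OF j])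
  also have "\<dots> = (- r j) *s Xm j v"
    unfolding Xm_def by (simp only: vector_ssub_ldistrib vector_smult_assoc) (simp add: mult_ac vector_smult_lneg)
  finally show ?thesis .
qed

lemma Xp_Xm: "j<t \<Longrightarrow> Xp j v + Xm j v = Pj j v"
proof -
  assume j: "j<t"
  have "Xp j v + Xm j v = (1 / (2 * r j)) *s ((B j *v v + r j *s Pj j v) + (r j *s Pj j v - B j *v v))"
    by (simp only: Xp_def Xm_def vector_add_ldistrib)
  also have "(B j *v v + r j *s Pj j v) + (r j *s Pj j v - B j *v v) = r j *s Pj j v + r j *s Pj j v"
    by (simp add: algebra_simps)
  also have "\<dots> = (2 * r j) *s Pj j v" by (simp only: mult_2 vector_sadd_rdistrib)
  also have "(1 / (2 * r j)) *s ((2 * r j) *s Pj j v) = Pj j v" using two r0[OF j] by (simp add: vector_smult_assoc)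
  finally show ?thesis .
qed

lemma Bp_M: assumes j: "j<t" and x: "B j *v x = r j *s x"
  shows "M *v x = (\<alpha> j + r j) *s x"
proof -
  have xx: "x = B j *v ((1 / r j) *s x)" using r0[OF j] x by (simp add: mv_neg mv_smult vector_smult_assoc)
  have Ai: "A i *v x = 0" if "i<s" for i by (subst xx) (simp add: AB that j)
  have Bl: "B l *v x = 0" if "l<t" "l \<noteq> j" for l by (subst xx) (simp add: BB that j)
  have "M *v x = - ((\<alpha> j / nn j) *s (B j *v (B j *v x))) + B j *v x"
    apply (simp add: Mv Ai)
    apply (subst sum_single[of _ j], simp, simp add: j, simp add: Bl)
    apply (subst sum_single[of _ j], simp, simp add: j, simp add: Bl)
    apply simp
    done
  also have "\<dots> = (\<alpha> j + r j) *s x"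
    using nn0[OF j] j by (simp add: x mv_smult vector_smult_assoc nn_r vector_sadd_rdistrib)
  finally show ?thesis .
qed

lemma Bm_M: assumes j: "j<t" and x: "B j *v x = (- r j) *s x"
  shows "M *v x = (\<alpha> j - r j) *s x"
proof -
  have xx: "x = B j *v ((- 1 / r j) *s x)" using r0[OF j] x by (simp add: mv_neg mv_smult vector_smult_assoc)
  have Ai: "A i *v x = 0" if "i<s" for i by (subst xx) (simp add: AB that j)
  have Bl: "B l *v x = 0" if "l<t" "l \<noteq> j" for l by (subst xx) (simp add: BB that j)
  have "M *v x = - ((\<alpha> j / nn j) *s (B j *v (B j *v x))) + B j *v x"
    apply (simp add: Mv Ai)
    apply (subst sum_single[of _ j], simp, simp add: j, simp add: Bl)
    apply (subst sum_single[of _ j], simp, simp add: j, simp add: Bl)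
    apply simp
    done
  also have "\<dots> = (\<alpha> j - r j) *s x"
    using nn0[OF j] j by (simp add: x mv_neg mv_smult vector_smult_assoc nn_r vector_sub_rdistrib vector_smult_lneg)
  finally show ?thesis .
qed

lemma kerM: "M *v x = 0 \<longleftrightarrow> (\<forall>i<s. A i *v x = 0) \<and> (\<forall>j<t. B j *v x = 0)"
proof
  assume e: "M *v x = 0"
  then have e': "M *v x = 0 *s x" by simp
  show "(\<forall>i<s. A i *v x = 0) \<and> (\<forall>j<t. B j *v x = 0)"
    using A_eig[OF e'] B_eig[OF e'] g0 p0 m0 by (metis (no_types, lifting))
qed (simp add: ker_all)

lemma span_decomp: "v = (\<Sum>i<s. A i *v v) + (\<Sum>j<t. Xp j v) + (\<Sum>j<t. Xm j v) + Zv v"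
proof -
  have "(\<Sum>j<t. Xp j v) + (\<Sum>j<t. Xm j v) = (\<Sum>j<t. Pj j v)"
    by (simp add: sum.distrib[symmetric] Xp_Xm)
  then show ?thesis using decomp[of v] by (simp add: add.assoc)
qed

end

lemma diag_of_span:
  fixes M :: "'a::field^'n^'n"
  assumes sp: "\<And>v. v \<in> vec.span {v. \<exists>\<mu>. M *v v = \<mu> *s v}"
  shows "diagonalizable_mat M"
proof -
  let ?E = "{v. \<exists>\<mu>. M *v v = \<mu> *s v}"
  obtain Bs where Bs: "Bs \<subseteq> ?E" "vec.independent Bs" "?E \<subseteq> vec.span Bs" "card Bs = vec.dim ?E"
    by (rule vec.basis_exists)
  have spE: "vec.span ?E = UNIV" using sp by auto
  have "vec.dim ?E = vec.dim (vec.span ?E)" by simp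
  also have "\<dots> = CARD('n)" unfolding spE vec.dim_UNIV by (rule card_cart_basis)
  finally have "vec.dim ?E = CARD('n)" .
  with Bs have cB: "card Bs = CARD('n)" by simp
  have fin: "finite Bs" using vec.finiteI_independent Bs(2) by blast
  obtain f where f: "bij_betw f (UNIV::'n set) Bs"
    using finite_same_card_bij[of "UNIV::'n set" Bs] fin cB by auto
  have spB: "vec.span Bs = UNIV"
    using vec.span_mono[OF Bs(3)] spE by (auto simp: vec.span_span)
  define P :: "'a^'n^'n" where "P = (\<chi> i k. f k $ i)"
  define d where "d k = (SOME \<mu>. M *v f k = \<mu> *s f k)" for k
  have fk: "M *v f k = d k *s f k" for k
  proof -
    have "f k \<in> ?E" using f Bs(1) by (auto simp: bij_betw_def)
    then have "\<exists>\<mu>. M *v f k = \<mu> *s f k" by simp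
    then show ?thesis unfolding d_def by (rule someI_ex)
  qed
  have col: "P *v x = (\<Sum>k\<in>UNIV. x$k *s f k)" for x
    by (simp add: P_def matrix_vector_mult_def vec_eq_iff mult.commute)
  have "surj ((*v) P)"
  proof -
    have "y \<in> range ((*v) P)" for y
    proof -
      have "y \<in> vec.span Bs" using spB by simp
      then obtain u where "y = (\<Sum>b\<in>Bs. u b *s b)" using vec.span_finite[OF fin] by auto
      also have "\<dots> = (\<Sum>k\<in>UNIV. u (f k) *s f k)"
        using sum.reindex_bij_betw[OF f, of "\<lambda>b. u b *s b"] by simp
      also have "\<dots> = P *v (\<chi> k. u (f k))" by (simp add: col)
      finally show ?thesis by blast
    qed
    then show ?thesis by blast
  qed
  then have "invertible P"
    using matrix_right_invertible_surjective invertible_right_inverse by blast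
  moreover have "M ** P = P ** (\<chi> i j. if i = j then d i else 0)"
  proof -
    have "(M ** P) $ i $ k = d k * f k $ i" for i k
    proof -
      have "(M ** P) $ i $ k = (M *v f k) $ i"
        by (simp add: matrix_matrix_mult_def matrix_vector_mult_def P_def)
      then show ?thesis by (simp add: fk)
    qed
    moreover have "(P ** (\<chi> i j. if i = j then d i else 0)) $ i $ k = d k * f k $ i" for i k
    proof -
      have "(P ** (\<chi> i j. if i = j then d i else 0)) $ i $ k = (\<Sum>l\<in>UNIV. f l $ i * (if l = k then d l else 0))"
        by (simp add: matrix_matrix_mult_def P_def)
      also have "\<dots> = (\<Sum>l\<in>UNIV. if l = k then f k $ i * d k else 0)"
        by (rule sum.cong) auto
      also have "\<dots> = d k * f k $ i" by (simp add: mult.commute)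
      finally show ?thesis .
    qed
    ultimately show ?thesis by (simp add: vec_eq_iff)
  qed
  ultimately show ?thesis unfolding diagonalizable_mat_def by blast
qed

lemma sum_I: fixes s t :: nat shows "sum f (insert None (Some ` (Inl ` {..<s} \<union> Inr ` {..<t}))) =
   f None + (\<Sum>i<s. f (Some (Inl i))) + (\<Sum>j<t. f (Some (Inr j)))"
proof -
  have "sum f (insert None (Some ` (Inl ` {..<s} \<union> Inr ` {..<t}))) = f None + sum f (Some ` (Inl ` {..<s} \<union> Inr ` {..<t}))"
    by (subst sum.insert) (auto simp: finite_imageI)
  also have "sum f (Some ` (Inl ` {..<s} \<union> Inr ` {..<t})) = sum (f \<circ> Some) (Inl ` {..<s} \<union> Inr ` {..<t})"
    by (rule sum.reindex) simp
  also have "\<dots> = sum (f \<circ> Some) (Inl ` {..<s}) + sum (f \<circ> Some) (Inr ` {..<t})"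
    by (rule sum.union_disjoint) auto
  also have "sum (f \<circ> Some) (Inl ` {..<s}) = (\<Sum>i<s. f (Some (Inl i)))"
    by (subst sum.reindex) auto
  also have "sum (f \<circ> Some) (Inr ` {..<t}) = (\<Sum>j<t. f (Some (Inr j)))"
    by (subst sum.reindex) auto
  finally show ?thesis by (simp add: add.assoc)
qed

context fvec begin

lemma Pj_add: "Pj j (x + y) = Pj j x + Pj j y"
  by (simp add: Pj_def matrix_vector_right_distrib vector_add_ldistrib)
lemma Pj_sum: "finite S \<Longrightarrow> Pj j (\<Sum>k\<in>S. g k) = (\<Sum>k\<in>S. Pj j (g k))"
  by (induction S rule: finite_induct) (auto simp: Pj_add, simp add: Pj_def)

lemma Pj_im: "j<t \<Longrightarrow> Pj j (B j *v u) = B j *v u"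
  using nn0[of j] by (simp add: Pj_def BBB vector_smult_assoc)

lemma Pj_in: "j<t \<Longrightarrow> Pj j v \<in> range (\<lambda>u. B j *v u)"
  unfolding Pj_def by (rule range_eqI[of _ _ "(- 1 / nn j) *s (B j *v v)"]) (simp add: mv_neg mv_smult)

end

context fvec_r begin

definition "Wf x = (case x of None \<Rightarrow> {v. M *v v = 0} | Some (Inl i) \<Rightarrow> range (\<lambda>v. A i *v v)
    | Some (Inr j) \<Rightarrow> range (\<lambda>v. B j *v v))"

definition "Ix = insert None (Some ` (Inl ` {..<s} \<union> Inr ` {..<t}))"

definition "canon v x = (if x \<in> Ix then (case x of None \<Rightarrow> Zv v | Some (Inl i) \<Rightarrow> A i *v v
    | Some (Inr j) \<Rightarrow> Pj j v) else undefined)"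

lemma canon_in: "canon v \<in> PiE Ix Wf"
  by (auto simp: PiE_def Pi_def canon_def Wf_def Ix_def M_Zv Pj_in extensional_def)

lemma canon_sum: "sum (canon v) Ix = v"
proof -
  have "sum (canon v) Ix = Zv v + (\<Sum>i<s. A i *v v) + (\<Sum>j<t. Pj j v)"
    unfolding Ix_def by (subst sum_I) (simp add: canon_def Ix_def)
  then show ?thesis using decomp[of v] by (simp add: algebra_simps)
qed

lemma canon_uniq: assumes f: "f \<in> PiE Ix Wf" and v: "v = sum f Ix" shows "f = canon v"
proof -
  have fN: "M *v f None = 0" using PiE_mem[OF f, of None] by (auto simp: Wf_def Ix_def)
  have fA: "\<exists>w. f (Some (Inl i)) = A i *v w" if "i<s" for i using PiE_mem[OF f, of "Some (Inl i)"] that by (auto simp: Wf_def Ix_def)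
  have fB: "\<exists>w. f (Some (Inr j)) = B j *v w" if "j<t" for j using PiE_mem[OF f, of "Some (Inr j)"] that by (auto simp: Wf_def Ix_def)
  have vs: "v = f None + (\<Sum>i<s. f (Some (Inl i))) + (\<Sum>j<t. f (Some (Inr j)))"
    using v unfolding Ix_def by (simp add: sum_I)
  have A1: "A i *v v = f (Some (Inl i))" if i: "i<s" for i
  proof -
    have "A i *v v = A i *v f None + (\<Sum>h<s. A i *v f (Some (Inl h))) + (\<Sum>j<t. A i *v f (Some (Inr j)))"
      by (subst vs) (simp add: matrix_vector_right_distrib mv_sum)
    also have "A i *v f None = 0" using kerM fN i by blast
    also have "(\<Sum>j<t. A i *v f (Some (Inr j))) = 0"
      by (rule sum_zero') (use fB AB i in fastforce)
    also have "(\<Sum>h<s. A i *v f (Some (Inl h))) = f (Some (Inl i))"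
    proof (subst sum_single[of _ i])
      show "A i *v f (Some (Inl h)) = 0" if "h \<in> {..<s}" "h \<noteq> i" for h
        using fA[of h] that AA[of i h] i by auto
      show "A i *v f (Some (Inl i)) = f (Some (Inl i))" using fA[OF i] AA[OF i i] by auto
    qed (use i in auto)
    finally show ?thesis by simp
  qed
  have B1: "Pj j v = f (Some (Inr j))" if j: "j<t" for j
  proof -
    have "Pj j v = Pj j (f None) + (\<Sum>h<s. Pj j (f (Some (Inl h)))) + (\<Sum>l<t. Pj j (f (Some (Inr l))))"
      by (subst vs) (simp add: Pj_add Pj_sum)
    also have "Pj j (f None) = 0" using kerM fN j by (simp add: Pj_def)
    also have "(\<Sum>h<s. Pj j (f (Some (Inl h)))) = 0"
      by (rule sum_zero') (use fA BA j in \<open>fastforce simp: Pj_def\<close>)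
    also have "(\<Sum>l<t. Pj j (f (Some (Inr l)))) = f (Some (Inr j))"
    proof (subst sum_single[of _ j])
      show "Pj j (f (Some (Inr l))) = 0" if "l \<in> {..<t}" "l \<noteq> j" for l
        using fB[of l] that BB[of j l] j by (auto simp: Pj_def)
      show "Pj j (f (Some (Inr j))) = f (Some (Inr j))" using fB[OF j] Pj_im[OF j] by auto
    qed (use j in auto)
    finally show ?thesis by simp
  qed
  have N1: "Zv v = f None"
  proof -
    have "(\<Sum>i<s. A i *v v) = (\<Sum>i<s. f (Some (Inl i)))" using A1 by simp
    moreover have "(\<Sum>j<t. Pj j v) = (\<Sum>j<t. f (Some (Inr j)))" using B1 by simp
    ultimately show ?thesis unfolding Zv_def using vs by (simp add: algebra_simps)
  qed
  show ?thesis
  proof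
    fix x show "f x = canon v x"
    proof (cases "x \<in> Ix")
      case False then show ?thesis using f by (auto simp: canon_def PiE_def extensional_def)
    next
      case True then show ?thesis using A1 B1 N1 by (auto simp: canon_def Ix_def)
    qed
  qed
qed

lemma ds_whole: "is_direct_sum Ix Wf UNIV"
  unfolding is_direct_sum_def
proof (intro conjI ballI)
  show "finite Ix" by (simp add: Ix_def)
  show "sum f Ix \<in> UNIV" for f by simp
  show "\<exists>!f. f \<in> PiE Ix Wf \<and> v = sum f Ix" for v
    using canon_in canon_sum canon_uniq by metis
qed

definition "W2 j b = {v. M *v v = (if b then \<alpha> j + r j else \<alpha> j - r j) *s v}"

lemma ds_B: assumes j: "j<t" shows "is_direct_sum (UNIV::bool set) (W2 j) (range (\<lambda>u. B j *v u))"
  unfolding is_direct_sum_def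
proof (intro conjI ballI)
  show "finite (UNIV::bool set)" by simp
  have inB: "x \<in> range (\<lambda>u. B j *v u)" if "x \<in> W2 j b" for x b
  proof (cases b)
    case True
    then have "B j *v x = r j *s x" using that B_eig_p j by (simp add: W2_def)
    then have "x = B j *v ((1 / r j) *s x)" using r0[OF j] by (simp add: mv_smult vector_smult_assoc)
    then show ?thesis by blast
  next
    case False
    then have "B j *v x = (- r j) *s x" using that B_eig_m j by (simp add: W2_def)
    then have "x = B j *v ((- 1 / r j) *s x)" using r0[OF j] by (simp add: mv_neg mv_smult vector_smult_assoc)
    then show ?thesis by blast
  qed
  show "sum f UNIV \<in> range (\<lambda>u. B j *v u)" if fP: "f \<in> PiE UNIV (W2 j)" for f
  proof -
    obtain a b where "f True = B j *v a" "f False = B j *v b"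
      using inB[OF PiE_mem[OF fP, of True]] inB[OF PiE_mem[OF fP, of False]] by blast
    then have "sum f UNIV = B j *v (a + b)" by (simp add: UNIV_bool matrix_vector_right_distrib add.commute)
    then show ?thesis by blast
  qed
  show "\<exists>!f. f \<in> PiE UNIV (W2 j) \<and> v = sum f UNIV" if v: "v \<in> range (\<lambda>u. B j *v u)" for v
  proof -
    have Pv: "Pj j v = v" using v Pj_im[OF j] by auto
    define g where "g b = (if b then Xp j v else Xm j v)" for b
    have g1: "g \<in> PiE UNIV (W2 j)"
      using Bp_M[OF j B_Xp[OF j]] Bm_M[OF j B_Xm[OF j]] by (auto simp: g_def W2_def)
    have g2: "v = sum g UNIV" using Xp_Xm[OF j, of v] Pv by (simp add: UNIV_bool g_def add.commute)
    have "f = g" if f: "f \<in> PiE UNIV (W2 j)" and fv: "v = sum f UNIV" for f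
    proof -
      have sT: "B j *v f True = r j *s f True" using PiE_mem[OF f, of True] B_eig_p[OF _ j] by (auto simp: W2_def)
      have sF: "B j *v f False = (- r j) *s f False" using PiE_mem[OF f, of False] B_eig_m[OF _ j] by (auto simp: W2_def)
      have vv: "v = f True + f False" using fv by (simp add: UNIV_bool add.commute)
      have Bv: "B j *v v = r j *s f True - r j *s f False"
        using sT sF by (subst vv) (simp add: matrix_vector_right_distrib vector_smult_lneg)
      have rv: "r j *s v = r j *s f True + r j *s f False"
        by (subst vv) (simp only: vector_add_ldistrib)
      have "B j *v v + r j *s v = r j *s f True + r j *s f True"
        unfolding Bv rv by (simp add: algebra_simps)
      also have "\<dots> = (2 * r j) *s f True" by (simp only: mult_2 vector_sadd_rdistrib)
      finally have "Xp j v = (1 / (2 * r j)) *s ((2 * r j) *s f True)"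
        unfolding Xp_def Pv by (rule arg_cong)
      also have "\<dots> = f True" using two r0[OF j] by (simp add: vector_smult_assoc)
      finally have t1: "Xp j v = f True" .
      have "Xm j v = f False" using Xp_Xm[OF j, of v] Pv t1 vv by (simp add: algebra_simps)
      then show ?thesis using t1 by (auto simp: g_def fun_eq_iff)
    qed
    then show ?thesis using g1 g2 by metis
  qed
qed

lemma eig_span: "v \<in> vec.span {v. \<exists>\<mu>. M *v v = \<mu> *s v}"
proof -
  let ?E = "{v. \<exists>\<mu>. M *v v = \<mu> *s v}"
  have "(\<Sum>i<s. A i *v v) \<in> vec.span ?E"
    by (rule vec.span_sum, rule vec.span_base) (use MA in blast)
  moreover have "(\<Sum>j<t. Xp j v) \<in> vec.span ?E"
    by (rule vec.span_sum, rule vec.span_base) (use Bp_M B_Xp in blast)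
  moreover have "(\<Sum>j<t. Xm j v) \<in> vec.span ?E"
    by (rule vec.span_sum, rule vec.span_base) (use Bm_M B_Xm in blast)
  moreover have "Zv v \<in> vec.span ?E"
    by (rule vec.span_base) (use M_Zv in \<open>auto intro: exI[of _ 0]\<close>)
  ultimately show ?thesis by (subst span_decomp) (intro vec.span_add)
qed

lemma eq_on_eig: assumes "\<And>v \<mu>. M *v v = \<mu> *s v \<Longrightarrow> XX *v v = YY *v v" shows "XX = YY"
proof -
  let ?E = "{v. \<exists>\<mu>. M *v v = \<mu> *s v}"
  have sub: "vec.subspace {v. XX *v v = YY *v v}"
    by (auto simp: vec.subspace_def matrix_vector_right_distrib mv_smult)
  have "vec.span ?E \<subseteq> {v. XX *v v = YY *v v}"
    by (rule vec.span_minimal[OF _ sub]) (use assms in auto)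
  then show ?thesis using eig_span by (auto simp: matrix_eq)
qed

end

context fvec_r begin

lemma Bp_exists: assumes j: "j<t" and w: "B j *v (B j *v w) + r j *s (B j *v w) \<noteq> 0"
  shows "\<exists>x. x \<noteq> 0 \<and> B j *v x = r j *s x"
proof (intro exI conjI)
  show "B j *v (B j *v w) + r j *s (B j *v w) \<noteq> 0" by (fact w)
  have "B j *v (B j *v (B j *v w)) = (r j * r j) *s (B j *v w)"
    using BBB[OF j] nn_r[OF j] by simp
  then have "B j *v (B j *v (B j *v w) + r j *s (B j *v w)) = (r j * r j) *s (B j *v w) + r j *s (B j *v (B j *v w))"
    by (simp only: matrix_vector_right_distrib mv_smult)
  also have "\<dots> = r j *s (B j *v (B j *v w) + r j *s (B j *v w))"
    by (simp only: vector_add_ldistrib vector_smult_assoc add.commute)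
  finally show "B j *v (B j *v (B j *v w) + r j *s (B j *v w)) = r j *s (B j *v (B j *v w) + r j *s (B j *v w))" .
qed

lemma Bm_exists: assumes j: "j<t" and w: "B j *v (B j *v w) - r j *s (B j *v w) \<noteq> 0"
  shows "\<exists>x. x \<noteq> 0 \<and> B j *v x = (- r j) *s x"
proof (intro exI conjI)
  show "B j *v (B j *v w) - r j *s (B j *v w) \<noteq> 0" by (fact w)
  have "B j *v (B j *v (B j *v w)) = (r j * r j) *s (B j *v w)"
    using BBB[OF j] nn_r[OF j] by simp
  then have "B j *v (B j *v (B j *v w) - r j *s (B j *v w)) = (r j * r j) *s (B j *v w) - r j *s (B j *v (B j *v w))"
    by (simp only: matrix_vector_mult_diff_distrib mv_smult)
  also have "\<dots> = (- r j) *s (B j *v (B j *v w) - r j *s (B j *v w))"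
    by (simp only: vector_ssub_ldistrib vector_smult_assoc vector_smult_lneg mult_minus_left) (simp add: algebra_simps)
  finally show "B j *v (B j *v (B j *v w) - r j *s (B j *v w)) = (- r j) *s (B j *v (B j *v w) - r j *s (B j *v w))" .
qed

lemma eig_set:
  assumes Ane: "\<And>i. i<s \<Longrightarrow> A i \<noteq> 0"
    and Bp: "\<And>j. j<t \<Longrightarrow> \<exists>x. x \<noteq> 0 \<and> B j *v x = r j *s x"
    and Bm: "\<And>j. j<t \<Longrightarrow> \<exists>x. x \<noteq> 0 \<and> B j *v x = (- r j) *s x"
  shows "{\<mu>. (\<exists>v. v \<noteq> 0 \<and> M *v v = \<mu> *s v) \<and> \<mu> \<noteq> 0} =
     \<gamma> ` {..<s} \<union> (\<lambda>j. \<alpha> j + r j) ` {..<t} \<union> (\<lambda>j. \<alpha> j - r j) ` {..<t}" (is "?L = ?R")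
proof
  show "?L \<subseteq> ?R"
  proof
    fix \<mu> assume "\<mu> \<in> ?L"
    then obtain v where v: "v \<noteq> 0" "M *v v = \<mu> *s v" and mu: "\<mu> \<noteq> 0" by auto
    show "\<mu> \<in> ?R"
    proof (rule ccontr)
      assume nR: "\<mu> \<notin> ?R"
      have "A i *v v = 0" if i: "i<s" for i
      proof -
        have "\<mu> \<noteq> \<gamma> i" using nR i by auto
        then show ?thesis using A_eig_ne[OF v(2) i] by simp
      qed
      moreover have "B j *v v = 0" if j: "j<t" for j
      proof -
        have "\<mu> \<noteq> \<alpha> j + r j" "\<mu> \<noteq> \<alpha> j - r j" using nR j by auto
        then show ?thesis using B_eig_ne[OF v(2) j] by simp
      qed
      ultimately have "M *v v = 0" by (simp add: ker_all)
      with v mu show False by simp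
    qed
  qed
  show "?R \<subseteq> ?L"
  proof
    fix \<mu> assume "\<mu> \<in> ?R"
    then consider (g) i where "i<s" "\<mu> = \<gamma> i" | (p) j where "j<t" "\<mu> = \<alpha> j + r j"
      | (m) j where "j<t" "\<mu> = \<alpha> j - r j" by auto
    then show "\<mu> \<in> ?L"
    proof cases
      case g
      obtain w where w: "A i *v w \<noteq> 0" using Ane[OF g(1)] by (metis matrix_eq matrix_vector_mult_0)
      have "M *v (A i *v w) = \<mu> *s (A i *v w)" using MA[OF g(1), of w] g(2) by simp
      moreover have "\<mu> \<noteq> 0" using g g0 by simp
      ultimately show ?thesis using w by blast
    next
      case p
      obtain x where x: "x \<noteq> 0" "B j *v x = r j *s x" using Bp[OF p(1)] by blast
      have "M *v x = \<mu> *s x" using Bp_M[OF p(1) x(2)] p(2) by simp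
      moreover have "\<mu> \<noteq> 0" using p p0 by simp
      ultimately show ?thesis using x by blast
    next
      case m
      obtain x where x: "x \<noteq> 0" "B j *v x = (- r j) *s x" using Bm[OF m(1)] by blast
      have "M *v x = \<mu> *s x" using Bm_M[OF m(1) x(2)] m(2) by simp
      moreover have "\<mu> \<noteq> 0" using m m0 by simp
      ultimately show ?thesis using x by blast
    qed
  qed
qed

end

lemma ext_mat_nth[simp]: "ext_mat XA $ i $ j = to_ac (XA $ i $ j)"
  by (simp add: ext_mat_def)
lemma ext_mat_mult: "ext_mat (XA ** YA) = ext_mat XA ** ext_mat YA"
  by (simp add: vec_eq_iff matrix_matrix_mult_def to_ac_sum)
lemma ext_mat_add: "ext_mat (XA + YA) = ext_mat XA + ext_mat YA"
  by (simp add: vec_eq_iff)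
lemma ext_mat_diff: "ext_mat (XA - YA) = ext_mat XA - ext_mat YA"
  by (simp add: vec_eq_iff)
lemma ext_mat_neg: "ext_mat (- XA) = - ext_mat XA"
  by (simp add: vec_eq_iff)
lemma ext_mat_0: "ext_mat 0 = 0"
  by (simp add: vec_eq_iff)
lemma ext_mat_sum: "finite S \<Longrightarrow> ext_mat (\<Sum>k\<in>S. XA k) = (\<Sum>k\<in>S. ext_mat (XA k))"
  by (induction S rule: finite_induct) (auto simp: ext_mat_0 ext_mat_add)
lemma ext_mat_scal: "ext_mat (scal_mat c XA) = scal_mat (to_ac c) (ext_mat XA)"
  by (simp add: vec_eq_iff scal_mat_def)
lemma ext_mat_inj: "ext_mat XA = ext_mat YA \<longleftrightarrow> XA = YA"
  by (auto simp: vec_eq_iff)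
lemma ext_mat_eq0: "ext_mat XA = 0 \<longleftrightarrow> XA = 0"
  using ext_mat_inj[of XA 0] by (simp add: ext_mat_0)

lemma fvec_of_mat:
  fixes M :: "'a::field^'n^'n"
  assumes "\<forall>i<s. \<forall>h<s. A i ** A h = (if i = h then A i else 0)"
    and "\<forall>i<s. \<forall>j<t. A i ** B j = 0 \<and> B j ** A i = 0"
    and "\<forall>j<t. \<forall>l<t. j \<noteq> l \<longrightarrow> B j ** B l = 0"
    and "\<forall>j<t. B j ** B j ** B j = - scal_mat (nn j) (B j)"
    and "\<forall>j<t. nn j \<noteq> 0"
    and "M = (\<Sum>i<s. scal_mat (\<gamma> i) (A i)) - (\<Sum>j<t. scal_mat (\<alpha> j / nn j) (B j ** B j)) + (\<Sum>j<t. B j)"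
  shows "fvec M s \<gamma> A t \<alpha> nn B"
proof
  fix i h x assume "i<s" "h<s"
  then show "A i *v (A h *v x) = (if i = h then A i *v x else 0)"
    using assms(1) by (simp add: matrix_vector_mul_assoc)
next
  fix i j x assume "i<s" "j<t"
  then show "A i *v (B j *v x) = 0" "B j *v (A i *v x) = 0"
    using assms(2) by (simp_all add: matrix_vector_mul_assoc)
next
  fix j l x assume "j<t" "l<t" "j \<noteq> l"
  then show "B j *v (B l *v x) = 0"
    using assms(3) by (simp add: matrix_vector_mul_assoc)
next
  fix j x assume "j<t"
  then show "B j *v (B j *v (B j *v x)) = (- nn j) *s (B j *v x)"
    using assms(4) by (simp add: matrix_vector_mul_assoc matrix_mul_assoc neg_mv scal_mat_mv vector_smult_lneg)
next
  fix j assume "j<t" then show "nn j \<noteq> 0" using assms(5) by simp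
next
  fix x show "M *v x = (\<Sum>i<s. \<gamma> i *s (A i *v x)) - (\<Sum>j<t. (\<alpha> j / nn j) *s (B j *v (B j *v x))) + (\<Sum>j<t. B j *v x)"
    by (subst assms(6)) (simp add: matrix_vector_mult_add_rdistrib matrix_vector_mult_diff_rdistrib sum_mv scal_mat_mv matrix_vector_mul_assoc)
qed

lemma two_ne: "CHAR('k::field) \<noteq> 2 \<Longrightarrow> (2::'k) \<noteq> 0"
proof
  assume c: "CHAR('k) \<noteq> 2" and z: "(2::'k) = 0"
  have "of_nat 2 = (0::'k)" using z by simp
  then have "CHAR('k) dvd 2" by (simp only: of_nat_eq_0_iff_char_dvd)
  moreover have "CHAR('k) \<le> 2" using \<open>CHAR('k) dvd 2\<close> by (rule dvd_imp_le) simp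
  moreover have "CHAR('k) \<noteq> Suc 0" by (rule CHAR_not_1)
  ultimately show False using c by (cases "CHAR('k)") (auto simp: le_Suc_eq)
qed

lemma conj_eq:
  fixes r r' :: "'k::field alg_closure"
  assumes "r' \<notin> range to_ac" "r ^ 2 = to_ac a" "r' ^ 2 = to_ac b" "r - r' = to_ac c" "(2::'k) \<noteq> 0"
  shows "c = 0"
proof (rule ccontr)
  assume c: "c \<noteq> 0"
  have "r = r' + to_ac c" using assms(4) by (simp add: algebra_simps)
  then have "to_ac a = to_ac b + 2 * to_ac c * r' + to_ac c ^ 2"
    using assms(2,3) by (simp add: power2_eq_square algebra_simps)
  then have "2 * to_ac c * r' = to_ac (a - b - c ^ 2)" by (simp add: algebra_simps)
  moreover have "(2::'k alg_closure) \<noteq> 0" using assms(5) by (metis to_ac_numeral to_ac_eq_0_iff)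
  ultimately have "r' = to_ac ((a - b - c ^ 2) / (2 * c))" using c
    by (simp add: field_simps)
  with assms(1) show False by blast
qed


lemma ffD0: "fine_frobenius M s \<gamma> A t \<alpha> nn r B \<Longrightarrow> 0 < s + t"
  unfolding fine_frobenius_def by (elim conjE) assumption

lemma ffD1: "fine_frobenius M s \<gamma> A t \<alpha> nn r B \<Longrightarrow> \<forall>i<s. A i \<noteq> 0"
  unfolding fine_frobenius_def by (elim conjE) assumption

lemma ffD2: "fine_frobenius M s \<gamma> A t \<alpha> nn r B \<Longrightarrow> \<forall>j<t. B j \<noteq> 0"
  unfolding fine_frobenius_def by (elim conjE) assumption

lemma ffD3: "fine_frobenius M s \<gamma> A t \<alpha> nn r B \<Longrightarrow> \<forall>j<t. r j ^ 2 = - to_ac (nn j) \<and> r j \<notin> range to_ac"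
  unfolding fine_frobenius_def by (elim conjE) assumption

lemma ffD4: "fine_frobenius M s \<gamma> A t \<alpha> nn r B \<Longrightarrow> \<forall>i<s. \<gamma> i \<noteq> 0"
  unfolding fine_frobenius_def by (elim conjE) assumption

lemma ffD5: "fine_frobenius M s \<gamma> A t \<alpha> nn r B \<Longrightarrow> \<forall>i<s. \<forall>h<s. i \<noteq> h \<longrightarrow> \<gamma> i \<noteq> \<gamma> h"
  unfolding fine_frobenius_def by (elim conjE) assumption

lemma ffD6: "fine_frobenius M s \<gamma> A t \<alpha> nn r B \<Longrightarrow> \<forall>j<t. \<forall>l<t. j \<noteq> l \<longrightarrow>
        to_ac (\<alpha> j) + r j \<noteq> to_ac (\<alpha> l) + r l \<and> to_ac (\<alpha> j) + r j \<noteq> to_ac (\<alpha> l) - r l"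
  unfolding fine_frobenius_def by (elim conjE) assumption

lemma ffD7: "fine_frobenius M s \<gamma> A t \<alpha> nn r B \<Longrightarrow> \<forall>i<s. \<forall>h<s. A i ** A h = (if i = h then A i else 0)"
  unfolding fine_frobenius_def by (elim conjE) assumption

lemma ffD8: "fine_frobenius M s \<gamma> A t \<alpha> nn r B \<Longrightarrow> \<forall>i<s. \<forall>j<t. A i ** B j = 0 \<and> B j ** A i = 0"
  unfolding fine_frobenius_def by (elim conjE) assumption

lemma ffD9: "fine_frobenius M s \<gamma> A t \<alpha> nn r B \<Longrightarrow> \<forall>j<t. \<forall>l<t. j \<noteq> l \<longrightarrow> B j ** B l = 0"
  unfolding fine_frobenius_def by (elim conjE) assumption

lemma ffD10: "fine_frobenius M s \<gamma> A t \<alpha> nn r B \<Longrightarrow> \<forall>j<t. B j ** B j ** B j = - scal_mat (nn j) (B j)"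
  unfolding fine_frobenius_def by (elim conjE) assumption

lemma ffD11: "fine_frobenius M s \<gamma> A t \<alpha> nn r B \<Longrightarrow> M = (\<Sum>i<s. scal_mat (\<gamma> i) (A i)) - (\<Sum>j<t. scal_mat (\<alpha> j / nn j) (B j ** B j))
         + (\<Sum>j<t. B j)"
  unfolding fine_frobenius_def by (elim conjE) assumption

lemma ff_nn0: "fine_frobenius M s \<gamma> A t \<alpha> nn r B \<Longrightarrow> j<t \<Longrightarrow> nn j \<noteq> 0"
proof
  assume ff: "fine_frobenius M s \<gamma> A t \<alpha> nn r B" and j: "j<t" and z: "nn j = 0"
  have "r j ^ 2 = 0" "r j \<notin> range to_ac" using ffD3[OF ff] j z by auto
  then show False by (metis power_zero_numeral zero_eq_power2 to_ac_0 rangeI)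
qed

lemma ff_fvec: assumes ff: "fine_frobenius M s \<gamma> A t \<alpha> nn r B"
  shows "fvec M s \<gamma> A t \<alpha> nn B"
  using ff_nn0[OF ff] by (intro fvec_of_mat ffD7[OF ff] ffD8[OF ff] ffD9[OF ff] ffD10[OF ff] ffD11[OF ff]) auto

lemma ff_fvec_ext: assumes ff: "fine_frobenius M s \<gamma> A t \<alpha> nn r B"
  shows "fvec (ext_mat M) s (\<lambda>i. to_ac (\<gamma> i)) (\<lambda>i. ext_mat (A i)) t (\<lambda>j. to_ac (\<alpha> j)) (\<lambda>j. to_ac (nn j)) (\<lambda>j. ext_mat (B j))"
proof (rule fvec_of_mat)
  note F = ffD7[OF ff] ffD8[OF ff] ffD9[OF ff] ffD10[OF ff] ffD11[OF ff]
  show "\<forall>i<s. \<forall>h<s. ext_mat (A i) ** ext_mat (A h) = (if i = h then ext_mat (A i) else 0)"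
    using F by (auto simp: ext_mat_mult[symmetric] ext_mat_0)
  show "\<forall>i<s. \<forall>j<t. ext_mat (A i) ** ext_mat (B j) = 0 \<and> ext_mat (B j) ** ext_mat (A i) = 0"
    using F by (auto simp: ext_mat_mult[symmetric] ext_mat_0)
  show "\<forall>j<t. \<forall>l<t. j \<noteq> l \<longrightarrow> ext_mat (B j) ** ext_mat (B l) = 0"
    using F by (auto simp: ext_mat_mult[symmetric] ext_mat_0)
  show "\<forall>j<t. ext_mat (B j) ** ext_mat (B j) ** ext_mat (B j) = - scal_mat (to_ac (nn j)) (ext_mat (B j))"
    using F by (auto simp: ext_mat_mult[symmetric] ext_mat_scal[symmetric] ext_mat_neg[symmetric])
  show "\<forall>j<t. to_ac (nn j) \<noteq> 0" using ff_nn0[OF ff] by simp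
  show "ext_mat M = (\<Sum>i<s. scal_mat (to_ac (\<gamma> i)) (ext_mat (A i))) -
      (\<Sum>j<t. scal_mat (to_ac (\<alpha> j) / to_ac (nn j)) (ext_mat (B j) ** ext_mat (B j))) + (\<Sum>j<t. ext_mat (B j))"
    using F by (simp add: ext_mat_add ext_mat_diff ext_mat_sum ext_mat_scal ext_mat_mult)
qed

lemma ff_fvec_r: fixes M :: "'k::field^'n^'n" assumes ff: "fine_frobenius M s \<gamma> A t \<alpha> nn r B" and ch: "CHAR('k) \<noteq> 2"
  shows "fvec_r (ext_mat M) s (\<lambda>i. to_ac (\<gamma> i)) (\<lambda>i. ext_mat (A i)) t (\<lambda>j. to_ac (\<alpha> j)) (\<lambda>j. to_ac (nn j)) (\<lambda>j. ext_mat (B j)) r"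
proof (rule fvec_r.intro[OF ff_fvec_ext[OF ff]], unfold_locales)
  note F = ffD3[OF ff] ffD4[OF ff] ffD5[OF ff] ffD6[OF ff]
  have two: "(2::'k) \<noteq> 0" using two_ne[OF ch] .
  have nr: "r j \<notin> range to_ac" if "j<t" for j using F that by blast
  show "r j ^ 2 = - to_ac (nn j)" if "j<t" for j using F that by blast
  show "(2::'k alg_closure) \<noteq> 0" using two by (metis to_ac_numeral to_ac_eq_0_iff)
  show "to_ac (\<gamma> i) \<noteq> 0" if "i<s" for i using F that by simp
  show "to_ac (\<gamma> i) \<noteq> to_ac (\<gamma> h)" if "i<s" "h<s" "i\<noteq>h" for i h using F that by simp
  show "to_ac (\<gamma> i) \<noteq> to_ac (\<alpha> j) + r j" if "i<s" "j<t" for i j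
  proof
    assume "to_ac (\<gamma> i) = to_ac (\<alpha> j) + r j"
    then have "r j = to_ac (\<gamma> i - \<alpha> j)" by simp
    with nr[OF that(2)] show False by blast
  qed
  show "to_ac (\<gamma> i) \<noteq> to_ac (\<alpha> j) - r j" if "i<s" "j<t" for i j
  proof
    assume "to_ac (\<gamma> i) = to_ac (\<alpha> j) - r j"
    then have "r j = to_ac (\<alpha> j - \<gamma> i)" by (simp add: algebra_simps)
    with nr[OF that(2)] show False by blast
  qed
  show "to_ac (\<alpha> j) + r j \<noteq> 0" if "j<t" for j
  proof
    assume "to_ac (\<alpha> j) + r j = 0"
    then have "r j = to_ac (- \<alpha> j)" by (simp add: add_eq_0_iff2)
    with nr[OF that] show False by blast
  qed
  show "to_ac (\<alpha> j) - r j \<noteq> 0" if "j<t" for j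
  proof
    assume "to_ac (\<alpha> j) - r j = 0"
    then have "r j = to_ac (\<alpha> j)" by simp
    with nr[OF that] show False by blast
  qed
  show "to_ac (\<alpha> j) + r j \<noteq> to_ac (\<alpha> l) + r l" if "j<t" "l<t" "j \<noteq> l" for j l using F that by blast
  show "to_ac (\<alpha> j) + r j \<noteq> to_ac (\<alpha> l) - r l" if "j<t" "l<t" "j \<noteq> l" for j l using F that by blast
  show "to_ac (\<alpha> j) - r j \<noteq> to_ac (\<alpha> l) - r l" if jl: "j<t" "l<t" "j \<noteq> l" for j l
  proof
    assume e: "to_ac (\<alpha> j) - r j = to_ac (\<alpha> l) - r l"
    have "r j ^ 2 = to_ac (- nn j)" "r l ^ 2 = to_ac (- nn l)" using F jl by auto
    moreover have "r j - r l = to_ac (\<alpha> j - \<alpha> l)" using e by (simp add: algebra_simps)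
    ultimately have "\<alpha> j - \<alpha> l = 0" using conj_eq[OF nr[OF jl(2)] _ _ _ two] by blast
    then have "to_ac (\<alpha> j) + r j = to_ac (\<alpha> l) + r l" using e by (simp add: algebra_simps)
    then show False using F jl by blast
  qed
qed

lemma the_monic_min:
  fixes Z :: "'a::field poly \<Rightarrow> bool"
  assumes l: "Polynomial.lead_coeff p0 = 1" and z: "Z p0" and mn: "\<And>q. q \<noteq> 0 \<Longrightarrow> Z q \<Longrightarrow> Polynomial.degree p0 \<le> Polynomial.degree q"
    and sub: "\<And>p q. Z p \<Longrightarrow> Z q \<Longrightarrow> Z (p - q)"
  shows "(THE p. Polynomial.lead_coeff p = 1 \<and> Z p \<and> (\<forall>q. q \<noteq> 0 \<and> Z q \<longrightarrow> Polynomial.degree p \<le> Polynomial.degree q)) = p0"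
proof (rule the_equality)
  have "p0 \<noteq> 0" using l by auto
  show "Polynomial.lead_coeff p0 = 1 \<and> Z p0 \<and> (\<forall>q. q \<noteq> 0 \<and> Z q \<longrightarrow> Polynomial.degree p0 \<le> Polynomial.degree q)" using l z mn by blast
  fix p assume p: "Polynomial.lead_coeff p = 1 \<and> Z p \<and> (\<forall>q. q \<noteq> 0 \<and> Z q \<longrightarrow> Polynomial.degree p \<le> Polynomial.degree q)"
  have "p \<noteq> 0" using p by auto
  have d: "Polynomial.degree p = Polynomial.degree p0" using p mn[of p] \<open>p0 \<noteq> 0\<close> \<open>p \<noteq> 0\<close> z by (meson le_antisym)
  define e where "e = p - p0"
  have Ze: "Z e" unfolding e_def using sub p z by blast
  have ce: "Polynomial.coeff e (Polynomial.degree p0) = 0" using p l d by (simp add: e_def)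
  have de: "Polynomial.degree e \<le> Polynomial.degree p0" unfolding e_def using d by (metis degree_diff_le le_refl)
  show "p = p0"
  proof (rule ccontr)
    assume "p \<noteq> p0"
    then have "e \<noteq> 0" by (simp add: e_def)
    then have "Polynomial.degree e \<noteq> Polynomial.degree p0" using ce by (metis leading_coeff_0_iff)
    with de have "Polynomial.degree e < Polynomial.degree p0" by simp
    with mn[OF \<open>e \<noteq> 0\<close> Ze] show False by simp
  qed
qed

lemma map_ac_add: "map_poly to_ac (p + q) = map_poly to_ac p + map_poly to_ac q"
  by (rule poly_eqI) (simp add: coeff_map_poly)
lemma map_ac_diff: "map_poly to_ac (p - q) = map_poly to_ac p - map_poly to_ac q"
  by (rule poly_eqI) (simp add: coeff_map_poly)
lemma map_ac_mult: "map_poly to_ac (p * q) = map_poly to_ac p * map_poly to_ac q"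
  by (rule poly_eqI) (simp add: coeff_map_poly coeff_mult to_ac_sum)
lemma map_ac_prod: "finite S \<Longrightarrow> map_poly to_ac (\<Prod>k\<in>S. f k) = (\<Prod>k\<in>S. map_poly to_ac (f k))"
  by (induction S rule: finite_induct) (simp_all add: map_ac_mult)
lemma map_ac_pCons: "map_poly to_ac (pCons a p) = pCons (to_ac a) (map_poly to_ac p)"
  by (simp add: map_poly_pCons)
lemma degree_map_ac: "Polynomial.degree (map_poly to_ac p) = Polynomial.degree p"
  by (rule degree_map_poly) simp

lemma deg_le1_root:
  fixes q :: "'k::field poly"
  assumes "Polynomial.degree q \<le> 1" "q \<noteq> 0" "poly (map_poly to_ac q) x = 0"
  shows "x \<in> range to_ac"
proof -
  have q: "q = [:Polynomial.coeff q 0, Polynomial.coeff q 1:]"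
    using assms(1) by (intro poly_eqI) (auto simp: coeff_pCons split: nat.splits intro: coeff_eq_0)
  show ?thesis
  proof (cases "Polynomial.coeff q 1 = 0")
    case True
    then have "Polynomial.coeff q 0 \<noteq> 0" using q assms(2) by auto
    moreover have "to_ac (Polynomial.coeff q 0) = 0" using assms(3) True by (subst (asm) q) (simp add: map_ac_pCons)
    ultimately show ?thesis by simp
  next
    case False
    have "to_ac (Polynomial.coeff q 0) + x * to_ac (Polynomial.coeff q 1) = 0" using assms(3) by (subst (asm) q) (simp add: map_ac_pCons)
    then have "x = to_ac (- Polynomial.coeff q 0 / Polynomial.coeff q 1)" using False by (simp add: field_simps add_eq_0_iff2)
    then show ?thesis by blast
  qed
qed

lemma irred_deg_le:
  fixes p g :: "'k::field poly"
  assumes irr: "Factorial_Ring.irreducible p" and rp: "poly (map_poly to_ac p) x = 0"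
    and g0: "g \<noteq> 0" and rg: "poly (map_poly to_ac g) x = 0"
  shows "Polynomial.degree p \<le> Polynomial.degree g"
proof -
  define P where "P q \<longleftrightarrow> q \<noteq> 0 \<and> poly (map_poly to_ac q) x = 0" for q :: "'k poly"
  define n where "n = (LEAST n. \<exists>q. P q \<and> Polynomial.degree q = n)"
  have ex: "\<exists>q. P q \<and> Polynomial.degree q = Polynomial.degree g" using g0 rg by (auto simp: P_def)
  then have "\<exists>n. \<exists>q. P q \<and> Polynomial.degree q = n" by blast
  then have "\<exists>q. P q \<and> Polynomial.degree q = n" unfolding n_def by (rule LeastI_ex)
  then obtain g1 where g1: "P g1" "Polynomial.degree g1 = n" by blast
  have nle: "n \<le> Polynomial.degree g" unfolding n_def using ex by (rule Least_le[where P="\<lambda>n. \<exists>q. P q \<and> Polynomial.degree q = n"])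
  have mn: "n \<le> Polynomial.degree q" if "P q" for q unfolding n_def using that by (auto intro: Least_le)
  have "p mod g1 = 0"
  proof (rule ccontr)
    assume ne: "p mod g1 \<noteq> 0"
    have "poly (map_poly to_ac (p mod g1)) x = 0"
    proof -
      have "p mod g1 = p - g1 * (p div g1)" by (metis add_diff_cancel_left' div_mult_mod_eq mult.commute)
      then show ?thesis using rp g1(1) by (simp add: P_def map_ac_diff map_ac_mult)
    qed
    then have "P (p mod g1)" using ne by (simp add: P_def)
    then have "n \<le> Polynomial.degree (p mod g1)" by (rule mn)
    moreover have "Polynomial.degree (p mod g1) < Polynomial.degree g1" using degree_mod_less[of g1 p] g1(1) ne by (auto simp: P_def)
    ultimately show False using g1(2) by simp
  qed
  then obtain u where pu: "p = g1 * u" by (metis dvd_def mod_0_imp_dvd)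
  have "\<not> is_unit g1"
  proof
    assume "is_unit g1"
    then have "Polynomial.degree g1 = 0" using g1(1) by (simp add: P_def is_unit_iff_degree)
    then have "Polynomial.degree g1 \<le> 1" by simp
    hence "x \<in> range to_ac" using deg_le1_root g1(1) by (auto simp: P_def)
    then obtain c where c: "x = to_ac c" by blast
    have "g1 = [:Polynomial.coeff g1 0:]" using \<open>Polynomial.degree g1 = 0\<close> by (metis degree_0_id)
    then have "poly (map_poly to_ac g1) x = to_ac (Polynomial.coeff g1 0)" by (metis map_ac_pCons map_poly_0 poly_pCons poly_0 mult_zero_right add_0_right)
    then show False using g1(1) \<open>g1 = [:Polynomial.coeff g1 0:]\<close> by (auto simp: P_def)
  qed
  then have "is_unit u" using Factorial_Ring.irreducibleD[OF irr pu] by blast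
  moreover have "u \<noteq> 0" using pu irr by auto
  ultimately have "Polynomial.degree u = 0" by (simp add: is_unit_iff_degree)
  moreover have "g1 \<noteq> 0" using g1 by (simp add: P_def)
  ultimately have "Polynomial.degree p = Polynomial.degree g1" using pu \<open>u \<noteq> 0\<close> by (simp add: degree_mult_eq)
  then show ?thesis using g1(2) nle by simp
qed

lemma irred_factor_exists:
  fixes m :: "'k::field poly"
  assumes "m \<noteq> 0" "Polynomial.degree m > 0"
  shows "\<exists>p. Factorial_Ring.irreducible p \<and> p dvd m"
  using assms
proof (induction "Polynomial.degree m" arbitrary: m rule: less_induct)
  case less
  show ?case
  proof (cases "Factorial_Ring.irreducible m")
    case True then show ?thesis by (intro exI[of _ m]) simp
  next
    case False
    have nu: "\<not> is_unit m" using less.prems by (simp add: is_unit_iff_degree)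
    obtain a b where ab: "m = a * b" "\<not> is_unit a" "\<not> is_unit b"
      using False less.prems(1) nu unfolding Factorial_Ring.irreducible_def by blast
    have a0: "a \<noteq> 0" "b \<noteq> 0" using ab less.prems(1) by auto
    have "Polynomial.degree b > 0" using ab(3) a0 by (simp add: is_unit_iff_degree)
    moreover have "Polynomial.degree a > 0" using ab(2) a0 by (simp add: is_unit_iff_degree)
    ultimately have "Polynomial.degree a < Polynomial.degree m" using ab(1) a0 by (simp add: degree_mult_eq)
    then obtain p where "Factorial_Ring.irreducible p" "p dvd a" using less.hyps[of a] a0 \<open>Polynomial.degree a > 0\<close> by blast
    then show ?thesis using ab(1) by auto
  qed
qed

lemma scal_mat_0[simp]: "scal_mat 0 XA = 0" by (simp add: scal_mat_def vec_eq_iff)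
lemma scal_mat_0r[simp]: "scal_mat c 0 = 0" by (simp add: scal_mat_def vec_eq_iff)
lemma scal_mat_add: "scal_mat (c + d) XA = scal_mat c XA + scal_mat d XA" by (simp add: scal_mat_def vec_eq_iff algebra_simps)
lemma scal_mat_addr: "scal_mat c (XA + YA) = scal_mat c XA + scal_mat c YA" by (simp add: scal_mat_def vec_eq_iff algebra_simps)
lemma scal_mat_scal: "scal_mat c (scal_mat d XA) = scal_mat (c * d) XA" by (simp add: scal_mat_def vec_eq_iff mult.assoc)
lemma scal_mat_sum: "finite S \<Longrightarrow> scal_mat c (\<Sum>k\<in>S. f k) = (\<Sum>k\<in>S. scal_mat c (f k))"
  by (induction S rule: finite_induct) (auto simp: scal_mat_addr)
lemma mm_scal: "(XA::'a::comm_ring_1^'n^'n) ** scal_mat c YA = scal_mat c (XA ** YA)"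
  by (simp add: scal_mat_def vec_eq_iff matrix_matrix_mult_def sum_distrib_left mult_ac)
lemma scal_mm: "scal_mat c (XA::'a::comm_ring_1^'n^'n) ** YA = scal_mat c (XA ** YA)"
  by (simp add: scal_mat_def vec_eq_iff matrix_matrix_mult_def sum_distrib_left mult_ac)
lemma mm_rdistrib: "((XA::'a::comm_ring_1^'n^'n) + YA) ** ZA = XA ** ZA + YA ** ZA"
  by (simp add: vec_eq_iff matrix_matrix_mult_def sum.distrib algebra_simps)
lemma mm_sum: "finite S \<Longrightarrow> (XA::'a::comm_ring_1^'n^'n) ** (\<Sum>k\<in>S. f k) = (\<Sum>k\<in>S. XA ** f k)"
  by (induction S rule: finite_induct) (auto simp: matrix_add_ldistrib)
lemma mat_pow_Suc: "mat_pow M (Suc i) = M ** mat_pow M i"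
  by (simp add: mat_pow_def)
lemma mat_pow_0: "mat_pow M 0 = mat 1"
  by (simp add: mat_pow_def)

lemma PM_ext: fixes p :: "'a::comm_ring_1 poly"
  assumes "Polynomial.degree p \<le> N"
  shows "poly_mat p M = (\<Sum>i\<le>N. scal_mat (Polynomial.coeff p i) (mat_pow M i))"
  unfolding poly_mat_def
  by (rule sum.mono_neutral_left) (use assms in \<open>auto simp: coeff_eq_0\<close>)

lemma PM_add: "poly_mat (p + q) M = poly_mat p M + poly_mat q M"
proof -
  let ?N = "max (Polynomial.degree p) (Polynomial.degree q)"
  have "poly_mat (p + q) M = (\<Sum>i\<le>?N. scal_mat (Polynomial.coeff (p + q) i) (mat_pow M i))"
    by (rule PM_ext) (simp add: degree_add_le)
  also have "\<dots> = (\<Sum>i\<le>?N. scal_mat (Polynomial.coeff p i) (mat_pow M i)) + (\<Sum>i\<le>?N. scal_mat (Polynomial.coeff q i) (mat_pow M i))"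
    by (simp add: scal_mat_add sum.distrib)
  also have "\<dots> = poly_mat p M + poly_mat q M"
    by (simp add: PM_ext[symmetric])
  finally show ?thesis .
qed

lemma PM_smult: "poly_mat (Polynomial.smult c p) M = scal_mat c (poly_mat p M)"
proof -
  have "poly_mat (Polynomial.smult c p) M = (\<Sum>i\<le>Polynomial.degree p. scal_mat (Polynomial.coeff (Polynomial.smult c p) i) (mat_pow M i))"
    by (rule PM_ext) (simp add: degree_smult_le)
  also have "\<dots> = scal_mat c (poly_mat p M)"
    by (simp add: poly_mat_def scal_mat_sum scal_mat_scal)
  finally show ?thesis .
qed

lemma PM_0[simp]: "poly_mat 0 M = 0"
  by (simp add: poly_mat_def)

lemma PM_pCons: "poly_mat (pCons a p) (M::'a::comm_ring_1^'n^'n) = scal_mat a (mat 1) + M ** poly_mat p M"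
proof -
  let ?N = "Polynomial.degree p"
  have "poly_mat (pCons a p) M = (\<Sum>i\<le>Suc ?N. scal_mat (Polynomial.coeff (pCons a p) i) (mat_pow M i))"
    by (rule PM_ext) (simp add: degree_pCons_le)
  also have "\<dots> = scal_mat a (mat 1) + (\<Sum>i\<le>?N. scal_mat (Polynomial.coeff p i) (mat_pow M (Suc i)))"
    by (subst sum.atMost_Suc_shift) (simp add: mat_pow_0)
  also have "(\<Sum>i\<le>?N. scal_mat (Polynomial.coeff p i) (mat_pow M (Suc i))) = M ** poly_mat p M"
    by (simp add: poly_mat_def mm_sum mm_scal mat_pow_Suc)
  finally show ?thesis .
qed

lemma PM_mult: "poly_mat (p * q) (M::'a::comm_ring_1^'n^'n) = poly_mat p M ** poly_mat q M"
proof (induction p rule: pCons_induct)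
  case 0 then show ?case by simp
next
  case (pCons a p)
  have "poly_mat (pCons a p * q) M = scal_mat a (poly_mat q M) + M ** poly_mat (p * q) M"
    by (simp add: PM_add PM_smult PM_pCons)
  also have "\<dots> = (scal_mat a (mat 1) + M ** poly_mat p M) ** poly_mat q M"
    by (simp add: pCons.IH mm_rdistrib scal_mm matrix_mul_assoc)
  finally show ?case by (simp add: PM_pCons)
qed

lemma PM_diff: "poly_mat (p - q) (M::'a::comm_ring_1^'n^'n) = poly_mat p M - poly_mat q M"
proof -
  have "poly_mat (p - q) M = poly_mat (p + Polynomial.smult (-1) q) M" by simp
  also have "\<dots> = poly_mat p M + scal_mat (-1) (poly_mat q M)" by (simp only: PM_add PM_smult)
  finally have "poly_mat (p - q) M = poly_mat p M + scal_mat (-1) (poly_mat q M)" .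
  then show ?thesis by (simp add: scal_mat_def vec_eq_iff)
qed

lemma PMv_pCons: "poly_mat (pCons a p) (M::'a::field^'n^'n) *v x = a *s x + M *v (poly_mat p M *v x)"
  by (simp add: PM_pCons matrix_vector_mult_add_rdistrib scal_mat_mv matrix_vector_mul_assoc)

lemma PMv_comm: assumes "f dvd q" "poly_mat f (M::'a::field^'n^'n) *v x = 0" shows "poly_mat q M *v x = 0"
proof -
  obtain g where "q = g * f" using assms(1) by (metis dvd_def mult.commute)
  then show ?thesis using assms(2) by (simp add: PM_mult matrix_vector_mul_assoc[symmetric])
qed

definition q0 :: "nat \<Rightarrow> (nat \<Rightarrow> 'a::field) \<Rightarrow> nat \<Rightarrow> (nat \<Rightarrow> 'a) \<Rightarrow> (nat \<Rightarrow> 'a) \<Rightarrow> 'a poly" where "q0 s \<gamma> t \<alpha> nn = [:0, 1:] * ((\<Prod>i<s. [:- \<gamma> i, 1:]) * (\<Prod>j<t. [:\<alpha> j ^ 2 + nn j, - 2 * \<alpha> j, 1:]))"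

context fvec begin

lemma MB: "j<t \<Longrightarrow> M *v (B j *v w) = \<alpha> j *s (B j *v w) + B j *v (B j *v w)"
proof -
  assume j: "j<t"
  have "M *v (B j *v w) = - ((\<alpha> j / nn j) *s (B j *v (B j *v (B j *v w)))) + B j *v (B j *v w)"
    apply (simp add: Mv AB j)
    apply (subst sum_single[of _ j], simp, simp add: j, simp add: BB j)
    apply (subst sum_single[of _ j], simp, simp add: j, simp add: BB j)
    apply simp
    done
  also have "\<dots> = \<alpha> j *s (B j *v w) + B j *v (B j *v w)"
    using nn0[OF j] by (simp add: BBB j vector_smult_assoc)
  finally show ?thesis .
qed

lemma M_Pj: "j<t \<Longrightarrow> M *v Pj j v = \<alpha> j *s Pj j v + B j *v v"
proof -
  assume j: "j<t"
  have "M *v Pj j v = (- 1 / nn j) *s (\<alpha> j *s (B j *v (B j *v v)) + B j *v (B j *v (B j *v v)))"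
    unfolding Pj_def by (simp only: mv_smult MB[OF j])
  also have "\<dots> = \<alpha> j *s Pj j v + B j *v v"
    using nn0[OF j] by (simp add: Pj_def BBB[OF j] vector_add_ldistrib vector_smult_assoc mult.commute)
  finally show ?thesis .
qed

lemma M_Bv: "j<t \<Longrightarrow> M *v (B j *v v) = \<alpha> j *s (B j *v v) - nn j *s Pj j v"
  using nn0[of j] by (simp add: MB Pj_def vector_smult_assoc)

lemma q0_ann: "poly_mat (q0 s \<gamma> t \<alpha> nn) M = 0"
proof -
  let ?q = "q0 s \<gamma> t \<alpha> nn"
  have k1: "poly_mat ?q M *v (A i *v v) = 0" if i: "i<s" for i v
  proof (rule PMv_comm)
    show "[:- \<gamma> i, 1:] dvd ?q" unfolding q0_def using i
      by (intro dvd_mult dvd_mult2 dvd_prodI) auto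
    show "poly_mat [:- \<gamma> i, 1:] M *v (A i *v v) = 0"
      by (simp add: PMv_pCons MA i)
  qed
  have k2: "poly_mat ?q M *v Zv v = 0" for v
  proof (rule PMv_comm)
    show "[:0, 1:] dvd ?q" unfolding q0_def by (rule dvd_triv_left)
    show "poly_mat [:0, 1:] M *v Zv v = 0"
      by (simp add: PMv_pCons M_Zv)
  qed
  have k3: "poly_mat ?q M *v Pj j v = 0" if j: "j<t" for j v
  proof (rule PMv_comm)
    show "[:\<alpha> j ^ 2 + nn j, - 2 * \<alpha> j, 1:] dvd ?q" unfolding q0_def using j
      by (intro dvd_mult dvd_prodI) auto
    let ?x = "Pj j v" and ?y = "B j *v v"
    have "poly_mat [:\<alpha> j ^ 2 + nn j, - 2 * \<alpha> j, 1:] M *v ?x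
       = (\<alpha> j ^ 2 + nn j) *s ?x + M *v ((- 2 * \<alpha> j) *s ?x + M *v ?x)"
      by (simp only: PMv_pCons PM_0 matrix_vector_mult_0 matrix_vector_mult_0_right add_0_right vector_smult_lid)
    also have "\<dots> = (\<alpha> j ^ 2 + nn j) *s ?x + ((- 2 * \<alpha> j) *s (\<alpha> j *s ?x + ?y) +
          (\<alpha> j *s (\<alpha> j *s ?x + ?y) + (\<alpha> j *s ?y - nn j *s ?x)))"
      by (simp only: matrix_vector_right_distrib mv_smult M_Pj[OF j] M_Bv[OF j])
    also have "\<dots> = 0"
      by (simp add: vec_eq_iff power2_eq_square algebra_simps)
    finally show "poly_mat [:\<alpha> j ^ 2 + nn j, - 2 * \<alpha> j, 1:] M *v ?x = 0" .
  qed
  have "poly_mat ?q M *v v = 0" for v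
  proof -
    have "poly_mat ?q M *v v = (\<Sum>i<s. poly_mat ?q M *v (A i *v v)) + (\<Sum>j<t. poly_mat ?q M *v Pj j v) + poly_mat ?q M *v Zv v"
      by (subst decomp[of v]) (simp add: matrix_vector_right_distrib mv_sum)
    then show ?thesis using k1 k2 k3 by simp
  qed
  then show ?thesis by (simp add: matrix_eq)
qed

end

lemma q0_nz: fixes \<gamma> \<alpha> nn :: "nat \<Rightarrow> 'a::field" and s t :: nat shows "q0 s \<gamma> t \<alpha> nn \<noteq> 0"
proof -
  have "(\<Prod>i<s. [:- \<gamma> i, 1:]) \<noteq> 0" by (subst prod_zero_iff) auto
  moreover have "(\<Prod>j<t. [:\<alpha> j ^ 2 + nn j, - 2 * \<alpha> j, 1:]) \<noteq> 0" by (subst prod_zero_iff) auto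
  ultimately show ?thesis unfolding q0_def by simp
qed

lemma mat1_ne0: "(mat 1 :: 'a::field^'n^'n) \<noteq> 0"
proof
  fix i :: 'n
  assume z: "(mat 1 :: 'a^'n^'n) = 0"
  have "vec_nth (vec_nth (mat 1 :: 'a^'n^'n) i) i = (1::'a)" by (simp add: mat_def)
  moreover have "vec_nth (vec_nth (0 :: 'a^'n^'n) i) i = (0::'a)" by simp
  ultimately show False using z by simp
qed

lemma minpoly_props:
  fixes M :: "'a::field^'n^'n" and q :: "'a poly"
  assumes q: "q \<noteq> 0" "poly_mat q M = 0"
  shows "Polynomial.lead_coeff (min_poly_mat M) = 1 \<and> poly_mat (min_poly_mat M) M = 0 \<and>
         min_poly_mat M dvd q \<and> Polynomial.degree (min_poly_mat M) > 0"
proof -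
  define P where "P g \<longleftrightarrow> g \<noteq> 0 \<and> poly_mat g M = 0" for g :: "'a poly"
  define n where "n = (LEAST n. \<exists>g. P g \<and> Polynomial.degree g = n)"
  have "\<exists>n. \<exists>g. P g \<and> Polynomial.degree g = n" using q by (auto simp: P_def)
  then have "\<exists>g. P g \<and> Polynomial.degree g = n" unfolding n_def by (rule LeastI_ex)
  then obtain g1 where g1: "P g1" "Polynomial.degree g1 = n" by blast
  have mn: "n \<le> Polynomial.degree g" if "P g" for g unfolding n_def using that by (auto intro: Least_le)
  define p0 where "p0 = Polynomial.smult (1 / Polynomial.lead_coeff g1) g1"
  have g10: "g1 \<noteq> 0" using g1 by (simp add: P_def)
  have l: "Polynomial.lead_coeff p0 = 1" using g10 by (simp add: p0_def)
  have z: "poly_mat p0 M = 0" using g1 by (simp add: p0_def PM_smult P_def)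
  have "Polynomial.lead_coeff g1 \<noteq> 0" using g10 by simp
  then have dp: "Polynomial.degree p0 = n" using g1 by (simp add: p0_def)
  have mn': "Polynomial.degree p0 \<le> Polynomial.degree g" if "g \<noteq> 0" "poly_mat g M = 0" for g
    using mn[of g] that dp by (simp add: P_def)
  have eq: "min_poly_mat M = p0" unfolding min_poly_mat_def
    by (rule the_monic_min[where Z = "\<lambda>g. poly_mat g M = 0"]) (use l z mn' in \<open>auto simp: PM_diff\<close>)
  have dv: "p0 dvd q"
  proof -
    have "q mod p0 = q - p0 * (q div p0)" by (metis add_diff_cancel_left' div_mult_mod_eq mult.commute)
    then have zm: "poly_mat (q mod p0) M = 0" using q z by (simp add: PM_diff PM_mult)
    have "q mod p0 = 0"
    proof (rule ccontr)
      assume ne: "q mod p0 \<noteq> 0"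
      have "p0 \<noteq> 0" using l by auto
      then have "Polynomial.degree (q mod p0) < Polynomial.degree p0" using degree_mod_less[of p0 q] ne by auto
      with mn'[OF ne zm] show False by simp
    qed
    then show ?thesis by (rule mod_0_imp_dvd)
  qed
  have dpos: "Polynomial.degree p0 > 0"
  proof (rule ccontr)
    assume "\<not> Polynomial.degree p0 > 0"
    then have "Polynomial.degree p0 = 0" by simp
    then have "p0 = [:1:]" using l by (metis degree_0_id)
    then have "poly_mat p0 M = mat 1" by (simp add: PM_pCons scal_mat_def vec_eq_iff)
    with z show False by (metis mat1_ne0)
  qed
  show ?thesis using eq l z dv dpos by simp
qed

lemma split_bound:
  fixes M :: "'k::field^'n^'n"
  assumes ann: "poly_mat (q0 s \<gamma> t \<alpha> nn) M = 0"
  shows "splitting_bound M \<le> 2"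
proof -
  let ?m = "min_poly_mat M"
  let ?q = "q0 s \<gamma> t \<alpha> nn"
  have mp: "Polynomial.lead_coeff ?m = 1" "poly_mat ?m M = 0" "?m dvd ?q" "Polynomial.degree ?m > 0"
    using minpoly_props[OF q0_nz ann] by auto
  let ?S = "{Polynomial.degree p | p. Factorial_Ring.irreducible p \<and> p dvd ?m}"
  have bd: "d \<le> 2" if "d \<in> ?S" for d
  proof -
    obtain p where p: "Factorial_Ring.irreducible p" "p dvd ?m" "d = Polynomial.degree p" using \<open>d \<in> ?S\<close> by blast
    have pq: "p dvd ?q" using p(2) mp(3) by (rule dvd_trans)
    have p0: "p \<noteq> 0" using p(1) by auto
    have "\<not> is_unit p" using p(1) by (auto simp: Factorial_Ring.irreducible_def)
    then have "Polynomial.degree p > 0" using p0 by (simp add: is_unit_iff_degree)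
    then obtain x where x: "poly (map_poly to_ac p) x = 0"
      using alg_closed_imp_poly_has_root[of "map_poly to_ac p"] by (auto simp: degree_map_ac)
    obtain u where "?q = p * u" using pq by (auto simp: dvd_def)
    then have "poly (map_poly to_ac ?q) x = 0" using x by (simp add: map_ac_mult)
    then have "poly (map_poly to_ac [:0, 1:]) x * ((\<Prod>i<s. poly (map_poly to_ac [:- \<gamma> i, 1:]) x) *
        (\<Prod>j<t. poly (map_poly to_ac [:\<alpha> j ^ 2 + nn j, - 2 * \<alpha> j, 1:]) x)) = 0"
      unfolding q0_def by (simp only: map_ac_mult map_ac_prod finite_lessThan poly_mult poly_prod)
    then consider "poly (map_poly to_ac [:0, 1:]) x = 0"
      | i where "i<s" "poly (map_poly to_ac [:- \<gamma> i, 1:]) x = 0"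
      | j where "j<t" "poly (map_poly to_ac [:\<alpha> j ^ 2 + nn j, - 2 * \<alpha> j, 1:]) x = 0"
      by (auto simp only: mult_eq_0_iff prod_zero_iff finite_lessThan lessThan_iff)
    then have "Polynomial.degree p \<le> 2"
    proof cases
      case 1
      then have "Polynomial.degree p \<le> Polynomial.degree [:0::'k, 1:]" by (intro irred_deg_le[OF p(1) x]) auto
      then show ?thesis by simp
    next
      case (2 i)
      then have "Polynomial.degree p \<le> Polynomial.degree [:- \<gamma> i, 1:]" by (intro irred_deg_le[OF p(1) x]) auto
      then show ?thesis by simp
    next
      case (3 j)
      then have "Polynomial.degree p \<le> Polynomial.degree [:\<alpha> j ^ 2 + nn j, - 2 * \<alpha> j, 1:]" by (intro irred_deg_le[OF p(1) x]) auto
      then show ?thesis by simp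
    qed
    then show ?thesis using p(3) by simp
  qed
  have ne: "?S \<noteq> {}"
  proof -
    have "?m \<noteq> 0" using mp(1) by auto
    then obtain p where "Factorial_Ring.irreducible p" "p dvd ?m" using irred_factor_exists mp(4) by blast
    then show ?thesis by blast
  qed
  have fin: "finite ?S" by (rule finite_subset[of _ "{..2}"]) (use bd in auto)
  show ?thesis unfolding splitting_bound_def using fin ne bd by (simp add: Max_le_iff)
qed

lemma alg_min_quad:
  fixes a n :: "'k::field" and r :: "'k alg_closure"
  assumes r2: "r ^ 2 = - to_ac n" and nr: "r \<notin> range to_ac"
  shows "alg_min_poly (to_ac a + r) = [:a ^ 2 + n, - 2 * a, 1:]"
  unfolding alg_min_poly_def
proof (rule the_monic_min[where Z = "\<lambda>q. poly (map_poly to_ac q) (to_ac a + r) = 0"])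
  show "Polynomial.lead_coeff [:a ^ 2 + n, - 2 * a, 1:] = 1" by simp
  show "poly (map_poly to_ac [:a ^ 2 + n, - 2 * a, 1:]) (to_ac a + r) = 0"
    using r2 by (simp add: map_ac_pCons power2_eq_square algebra_simps)
  show "Polynomial.degree [:a ^ 2 + n, - 2 * a, 1:] \<le> Polynomial.degree q"
    if "q \<noteq> 0" "poly (map_poly to_ac q) (to_ac a + r) = 0" for q
  proof (rule ccontr)
    assume "\<not> ?thesis"
    then have "Polynomial.degree q \<le> 1" by simp
    then have "to_ac a + r \<in> range to_ac" using deg_le1_root that by blast
    then obtain c where "to_ac a + r = to_ac c" by blast
    then have "r = to_ac (c - a)" by (simp add: algebra_simps)
    with nr show False by blast
  qed
  show "poly (map_poly to_ac (p - q)) (to_ac a + r) = 0"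
    if "poly (map_poly to_ac p) (to_ac a + r) = 0" "poly (map_poly to_ac q) (to_ac a + r) = 0" for p q
    using that by (simp add: map_ac_diff)
qed

lemma eigsp: "eigenspace (XA::'a::field^'n^'n) \<mu> = {v. XA *v v = \<mu> *s v}"
  by (simp add: eigenspace_def ker_mat_def matrix_vector_mult_diff_rdistrib mat_mv)

lemma B_nz_aux:
  fixes Bm :: "'k::field^'n^'n" and \<rho> :: "'k alg_closure"
  assumes "Bm \<noteq> 0" "\<rho> \<notin> range to_ac"
  shows "\<exists>w. ext_mat Bm *v (ext_mat Bm *v w) + \<rho> *s (ext_mat Bm *v w) \<noteq> 0"
proof (rule ccontr)
  assume "\<not> ?thesis"
  then have "\<forall>w. (ext_mat Bm ** ext_mat Bm + scal_mat \<rho> (ext_mat Bm)) *v w = 0 *v w"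
    by (simp add: matrix_vector_mult_add_rdistrib scal_mat_mv matrix_vector_mul_assoc)
  then have Z: "ext_mat (Bm ** Bm) + scal_mat \<rho> (ext_mat Bm) = 0"
    by (simp only: matrix_eq[symmetric] ext_mat_mult)
  obtain p q where pq: "Bm $ p $ q \<noteq> 0" using assms(1) by (metis vec_eq_iff zero_index)
  have "(ext_mat (Bm ** Bm) + scal_mat \<rho> (ext_mat Bm)) $ p $ q = 0" using Z by simp
  then have "to_ac ((Bm ** Bm) $ p $ q) + \<rho> * to_ac (Bm $ p $ q) = 0" by (simp add: scal_mat_def)
  then have "\<rho> = to_ac (- ((Bm ** Bm) $ p $ q) / Bm $ p $ q)" using pq by (simp add: field_simps add_eq_0_iff2)
  with assms(2) show False by blast
qed

theorem lemma3p4: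
  fixes M :: "'k::field ^'n^'n"
    and s t :: nat and \<gamma> \<alpha> nn :: "nat \<Rightarrow> 'k" and r :: "nat \<Rightarrow> 'k alg_closure"
    and A B :: "nat \<Rightarrow> 'k^'n^'n"
  assumes char: "CHAR('k) \<noteq> 2"
    and dec: "fine_frobenius M s \<gamma> A t \<alpha> nn r B"
  shows
    "\<comment> \<open>(a)\<close>
    (semisimple M \<and> M \<noteq> 0 \<and>
     inj_on (frob_ev \<gamma> \<alpha> r) (Inl ` {..<s} \<union> Inr ` ({..<t} \<times> UNIV)) \<and>
     {\<mu>. is_eigenvalue (ext_mat M) \<mu> \<and> \<mu> \<noteq> 0} =
       frob_ev \<gamma> \<alpha> r ` (Inl ` {..<s} \<union> Inr ` ({..<t} \<times> UNIV))) \<and>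
    \<comment> \<open>(b)\<close>
    (is_direct_sum (insert None (Some ` (Inl ` {..<s} \<union> Inr ` {..<t}))) (frob_space M A B) UNIV \<and>
     (\<forall>i<s. im_mat (ext_mat (A i)) = eigenspace (ext_mat M) (to_ac (\<gamma> i))) \<and>
     (\<forall>j<t. is_direct_sum (UNIV :: bool set)
        (\<lambda>b. eigenspace (ext_mat M) (if b then to_ac (\<alpha> j) + r j else to_ac (\<alpha> j) - r j))
        (im_mat (ext_mat (B j)))) \<and>
     ker_mat (ext_mat M) = (\<Inter>i\<in>{..<s}. ker_mat (ext_mat (A i))) \<inter> (\<Inter>j\<in>{..<t}. ker_mat (ext_mat (B j))) \<and>
     (\<forall>j<t. eigenspace (ext_mat M) (to_ac (\<alpha> j) + r j) = ker_mat (ext_mat (B j) - mat (r j)) \<and>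
            eigenspace (ext_mat M) (to_ac (\<alpha> j) - r j) = ker_mat (ext_mat (B j) + mat (r j)))) \<and>
    \<comment> \<open>(c)\<close>
    ((\<forall>i<s. (\<forall>v \<in> eigenspace (ext_mat M) (to_ac (\<gamma> i)). ext_mat (A i) *v v = v) \<and>
            (\<forall>\<mu>. is_eigenvalue (ext_mat M) \<mu> \<and> \<mu> \<noteq> to_ac (\<gamma> i) \<longrightarrow>
                 (\<forall>v \<in> eigenspace (ext_mat M) \<mu>. ext_mat (A i) *v v = 0))) \<and>
     (\<forall>s' \<gamma>' A' t' \<alpha>' nn' r' B'. fine_frobenius M s' \<gamma>' A' t' \<alpha>' nn' r' B' \<longrightarrow>
        (\<forall>i<s. \<forall>i'<s'. \<gamma> i = \<gamma>' i' \<longrightarrow> A i = A' i'))) \<and>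
    \<comment> \<open>(d)\<close>
    ((\<forall>j<t. (\<forall>v \<in> eigenspace (ext_mat M) (to_ac (\<alpha> j) + r j). ext_mat (B j) *v v = r j *s v) \<and>
            (\<forall>v \<in> eigenspace (ext_mat M) (to_ac (\<alpha> j) - r j). ext_mat (B j) *v v = (- r j) *s v) \<and>
            (\<forall>\<mu>. is_eigenvalue (ext_mat M) \<mu> \<and> \<mu> \<noteq> to_ac (\<alpha> j) + r j \<and> \<mu> \<noteq> to_ac (\<alpha> j) - r j \<longrightarrow>
                 (\<forall>v \<in> eigenspace (ext_mat M) \<mu>. ext_mat (B j) *v v = 0))) \<and>
     (\<forall>s' \<gamma>' A' t' \<alpha>' nn' r' B'. fine_frobenius M s' \<gamma>' A' t' \<alpha>' nn' r' B' \<longrightarrow>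
        (\<forall>j<t. \<forall>j'<t'.
           (to_ac (\<alpha> j) + r j = to_ac (\<alpha>' j') + r' j' \<or> to_ac (\<alpha> j) + r j = to_ac (\<alpha>' j') - r' j')
           \<longrightarrow> B j = B' j'))) \<and>
    \<comment> \<open>(e)\<close>
    ((\<forall>j<t. alg_degree (to_ac (\<alpha> j) + r j) = 2 \<and>
            map_poly to_ac (alg_min_poly (to_ac (\<alpha> j) + r j)) =
              [:- (to_ac (\<alpha> j) + r j), 1:] * [:- (to_ac (\<alpha> j) - r j), 1:] \<and>
            \<alpha> j = H_K (to_ac (\<alpha> j) + r j) \<and>
            to_ac (nn j) = - (V_K (to_ac (\<alpha> j) + r j) ^ 2)) \<and>
     splitting_bound M \<le> 2)"
proof -
  interpret E: fvec_r "ext_mat M" s "\<lambda>i. to_ac (\<gamma> i)" "\<lambda>i. ext_mat (A i)" t "\<lambda>j. to_ac (\<alpha> j)"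
      "\<lambda>j. to_ac (nn j)" "\<lambda>j. ext_mat (B j)" r
    by (rule ff_fvec_r[OF dec char])
  interpret K: fvec M s \<gamma> A t \<alpha> nn B by (rule ff_fvec[OF dec])

  have ch2: "(2::'k) \<noteq> 0" by (rule two_ne[OF char])
  have nr: "r j \<notin> range to_ac" if "j<t" for j using ffD3[OF dec] that by blast
  have r2: "r j ^ 2 = - to_ac (nn j)" if "j<t" for j using ffD3[OF dec] that by blast
  have Ane: "ext_mat (A i) \<noteq> 0" if "i<s" for i using ffD1[OF dec] that by (simp add: ext_mat_eq0)
  have Bp: "\<exists>x. x \<noteq> 0 \<and> ext_mat (B j) *v x = r j *s x" if j: "j<t" for j
  proof -
    obtain w where "ext_mat (B j) *v (ext_mat (B j) *v w) + r j *s (ext_mat (B j) *v w) \<noteq> 0"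
      using B_nz_aux[of "B j" "r j"] ffD2[OF dec] nr j by blast
    then show ?thesis using E.Bp_exists[OF j] by blast
  qed
  have Bm: "\<exists>x. x \<noteq> 0 \<and> ext_mat (B j) *v x = (- r j) *s x" if j: "j<t" for j
  proof -
    have "- r j \<notin> range to_ac"
    proof
      assume "- r j \<in> range to_ac"
      then obtain c where "- r j = to_ac c" by blast
      then have "r j = to_ac (- c)" by (simp add: minus_equation_iff)
      with nr[OF j] show False by blast
    qed
    then obtain w where "ext_mat (B j) *v (ext_mat (B j) *v w) + (- r j) *s (ext_mat (B j) *v w) \<noteq> 0"
      using B_nz_aux[of "B j" "- r j"] ffD2[OF dec] j by blast
    then show ?thesis using E.Bm_exists[OF j] by (simp add: vector_smult_lneg)
  qed
  have eigset: "{\<mu>. is_eigenvalue (ext_mat M) \<mu> \<and> \<mu> \<noteq> 0} =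
     (\<lambda>i. to_ac (\<gamma> i)) ` {..<s} \<union> (\<lambda>j. to_ac (\<alpha> j) + r j) ` {..<t} \<union> (\<lambda>j. to_ac (\<alpha> j) - r j) ` {..<t}"
    unfolding is_eigenvalue_def by (rule E.eig_set[OF Ane Bp Bm])
  have imgeq: "frob_ev \<gamma> \<alpha> r ` (Inl ` {..<s} \<union> Inr ` ({..<t} \<times> UNIV)) =
     (\<lambda>i. to_ac (\<gamma> i)) ` {..<s} \<union> (\<lambda>j. to_ac (\<alpha> j) + r j) ` {..<t} \<union> (\<lambda>j. to_ac (\<alpha> j) - r j) ` {..<t}"
  proof (intro equalityI subsetI)
    fix \<mu> assume "\<mu> \<in> frob_ev \<gamma> \<alpha> r ` (Inl ` {..<s} \<union> Inr ` ({..<t} \<times> UNIV))"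
    then show "\<mu> \<in> (\<lambda>i. to_ac (\<gamma> i)) ` {..<s} \<union> (\<lambda>j. to_ac (\<alpha> j) + r j) ` {..<t} \<union> (\<lambda>j. to_ac (\<alpha> j) - r j) ` {..<t}"
      by (auto simp: frob_ev_def)
  next
    fix \<mu> assume "\<mu> \<in> (\<lambda>i. to_ac (\<gamma> i)) ` {..<s} \<union> (\<lambda>j. to_ac (\<alpha> j) + r j) ` {..<t} \<union> (\<lambda>j. to_ac (\<alpha> j) - r j) ` {..<t}"
    then consider i where "i<s" "\<mu> = to_ac (\<gamma> i)" | j where "j<t" "\<mu> = to_ac (\<alpha> j) + r j"
      | j where "j<t" "\<mu> = to_ac (\<alpha> j) - r j" by blast
    then show "\<mu> \<in> frob_ev \<gamma> \<alpha> r ` (Inl ` {..<s} \<union> Inr ` ({..<t} \<times> UNIV))"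
    proof cases
      case 1 then show ?thesis by (intro image_eqI[of _ _ "Inl i"]) (auto simp: frob_ev_def)
    next
      case 2 then show ?thesis by (intro image_eqI[of _ _ "Inr (j, True)"]) (auto simp: frob_ev_def)
    next
      case 3 then show ?thesis by (intro image_eqI[of _ _ "Inr (j, False)"]) (auto simp: frob_ev_def)
    qed
  qed
  have a1: "semisimple M" unfolding semisimple_def by (rule diag_of_span[OF E.eig_span])
  have a4: "{\<mu>. is_eigenvalue (ext_mat M) \<mu> \<and> \<mu> \<noteq> 0} =
       frob_ev \<gamma> \<alpha> r ` (Inl ` {..<s} \<union> Inr ` ({..<t} \<times> UNIV))" using eigset imgeq by simp
  have a2: "M \<noteq> 0"
  proof
    assume M0: "M = 0"
    have "{\<mu>. is_eigenvalue (ext_mat M) \<mu> \<and> \<mu> \<noteq> 0} = {}"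
      using M0 by (auto simp: is_eigenvalue_def ext_mat_0)
    moreover have "0 < s + t" by (rule ffD0[OF dec])
    then have "(\<lambda>i. to_ac (\<gamma> i)) ` {..<s} \<union> (\<lambda>j. to_ac (\<alpha> j) + r j) ` {..<t} \<union> (\<lambda>j. to_ac (\<alpha> j) - r j) ` {..<t} \<noteq> {}"
      by auto
    ultimately show False using eigset by simp
  qed
  have a3: "inj_on (frob_ev \<gamma> \<alpha> r) (Inl ` {..<s} \<union> Inr ` ({..<t} \<times> UNIV))"
  proof (rule inj_onI)
    fix x y assume x: "x \<in> Inl ` {..<s} \<union> Inr ` ({..<t} \<times> UNIV)" and y: "y \<in> Inl ` {..<s} \<union> Inr ` ({..<t} \<times> UNIV)"
      and e: "frob_ev \<gamma> \<alpha> r x = frob_ev \<gamma> \<alpha> r y"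
    from x consider (l) i where "x = Inl i" "i<s" | (r) j b where "x = Inr (j, b)" "j<t" by blast
    then show "x = y"
    proof cases
      case l
      from y consider (l') h where "y = Inl h" "h<s" | (r') l b' where "y = Inr (l, b')" "l<t" by blast
      then show ?thesis
      proof cases
        case l'
        then have "to_ac (\<gamma> i) = to_ac (\<gamma> h)" using e l by (simp add: frob_ev_def)
        then show ?thesis using E.gg[OF l(2) l'(2)] l l' by auto
      next
        case r'
        then have "to_ac (\<gamma> i) = (if b' then to_ac (\<alpha> l) + r l else to_ac (\<alpha> l) - r l)" using e l by (simp add: frob_ev_def)
        then show ?thesis using E.gp[OF l(2) r'(2)] E.gm[OF l(2) r'(2)] by (cases b') auto
      qed
    next
      case r
      from y consider (l') h where "y = Inl h" "h<s" | (r') l b' where "y = Inr (l, b')" "l<t" by blast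
      then show ?thesis
      proof cases
        case l'
        then have "to_ac (\<gamma> h) = (if b then to_ac (\<alpha> j) + r j else to_ac (\<alpha> j) - r j)" using e r by (simp add: frob_ev_def)
        then show ?thesis using E.gp[OF l'(2) r(2)] E.gm[OF l'(2) r(2)] by (cases b) auto
      next
        case r'
        then have ee: "(if b then to_ac (\<alpha> j) + r j else to_ac (\<alpha> j) - r j) = (if b' then to_ac (\<alpha> l) + r l else to_ac (\<alpha> l) - r l)"
          using e r by (simp add: frob_ev_def)
        show ?thesis
        proof (cases "j = l")
          case True then show ?thesis using ee E.pm_self[OF r(2)] r r' by (cases b; cases b') auto
        next
          case False then show ?thesis using ee E.pp[OF r(2) r'(2) False] E.pm[OF r(2) r'(2) False] E.pm[OF r'(2) r(2)] E.mm[OF r(2) r'(2) False] False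
            by (cases b; cases b') auto
        qed
      qed
    qed
  qed

  have b1: "is_direct_sum (insert None (Some ` (Inl ` {..<s} \<union> Inr ` {..<t}))) (frob_space M A B) UNIV"
  proof -
    have "frob_space M A B = E.Wf"
      by (auto simp: fun_eq_iff frob_space_def E.Wf_def ker_mat_def im_mat_def split: option.splits sum.splits)
    then show ?thesis using E.ds_whole by (simp add: E.Ix_def)
  qed
  have b2: "\<forall>i<s. im_mat (ext_mat (A i)) = eigenspace (ext_mat M) (to_ac (\<gamma> i))"
  proof (intro allI impI equalityI subsetI)
    fix i v assume i: "i<s" and "v \<in> im_mat (ext_mat (A i))"
    then obtain w where "v = ext_mat (A i) *v w" by (auto simp: im_mat_def)
    then show "v \<in> eigenspace (ext_mat M) (to_ac (\<gamma> i))" using E.MA[OF i, of w] by (simp add: eigsp)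
  next
    fix i v assume i: "i<s" and "v \<in> eigenspace (ext_mat M) (to_ac (\<gamma> i))"
    then have "ext_mat (A i) *v v = v" using E.A_eig[of v "to_ac (\<gamma> i)" i] by (simp add: eigsp)
    then show "v \<in> im_mat (ext_mat (A i))" unfolding im_mat_def by (metis rangeI)
  qed
  have b3: "\<forall>j<t. is_direct_sum (UNIV :: bool set)
        (\<lambda>b. eigenspace (ext_mat M) (if b then to_ac (\<alpha> j) + r j else to_ac (\<alpha> j) - r j))
        (im_mat (ext_mat (B j)))"
  proof (intro allI impI)
    fix j assume j: "j<t"
    have "(\<lambda>b. eigenspace (ext_mat M) (if b then to_ac (\<alpha> j) + r j else to_ac (\<alpha> j) - r j)) = E.W2 j"
      by (simp add: fun_eq_iff eigsp E.W2_def)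
    then show "is_direct_sum (UNIV :: bool set)
        (\<lambda>b. eigenspace (ext_mat M) (if b then to_ac (\<alpha> j) + r j else to_ac (\<alpha> j) - r j))
        (im_mat (ext_mat (B j)))" using E.ds_B[OF j] by (simp add: im_mat_def)
  qed
  have b4: "ker_mat (ext_mat M) = (\<Inter>i\<in>{..<s}. ker_mat (ext_mat (A i))) \<inter> (\<Inter>j\<in>{..<t}. ker_mat (ext_mat (B j)))"
    by (auto simp: ker_mat_def E.kerM)
  have b5: "\<forall>j<t. eigenspace (ext_mat M) (to_ac (\<alpha> j) + r j) = ker_mat (ext_mat (B j) - mat (r j)) \<and>
            eigenspace (ext_mat M) (to_ac (\<alpha> j) - r j) = ker_mat (ext_mat (B j) + mat (r j))"
  proof (intro allI impI conjI)
    fix j assume j: "j<t"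
    show "eigenspace (ext_mat M) (to_ac (\<alpha> j) + r j) = ker_mat (ext_mat (B j) - mat (r j))"
      using E.B_eig_p[OF _ j] E.Bp_M[OF j]
      by (auto simp: eigsp ker_mat_def matrix_vector_mult_diff_rdistrib mat_mv)
    show "eigenspace (ext_mat M) (to_ac (\<alpha> j) - r j) = ker_mat (ext_mat (B j) + mat (r j))"
      using E.B_eig_m[OF _ j] E.Bm_M[OF j]
      by (auto simp: eigsp ker_mat_def matrix_vector_mult_add_rdistrib mat_mv vector_smult_lneg eq_neg_iff_add_eq_0)
  qed
  have c1: "\<forall>i<s. (\<forall>v \<in> eigenspace (ext_mat M) (to_ac (\<gamma> i)). ext_mat (A i) *v v = v) \<and>
            (\<forall>\<mu>. is_eigenvalue (ext_mat M) \<mu> \<and> \<mu> \<noteq> to_ac (\<gamma> i) \<longrightarrow>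
                 (\<forall>v \<in> eigenspace (ext_mat M) \<mu>. ext_mat (A i) *v v = 0))"
  proof (intro allI impI conjI ballI)
    fix i v assume i: "i<s" and v: "v \<in> eigenspace (ext_mat M) (to_ac (\<gamma> i))"
    then show "ext_mat (A i) *v v = v" using E.A_eig[of v "to_ac (\<gamma> i)" i] by (simp add: eigsp)
  next
    fix i \<mu> v assume i: "i<s" and mu: "is_eigenvalue (ext_mat M) \<mu> \<and> \<mu> \<noteq> to_ac (\<gamma> i)"
      and v: "v \<in> eigenspace (ext_mat M) \<mu>"
    show "ext_mat (A i) *v v = 0" using E.A_eig_ne[of v \<mu> i] i mu v by (simp add: eigsp)
  qed
  have c2: "\<forall>s' \<gamma>' A' t' \<alpha>' nn' r' B'. fine_frobenius M s' \<gamma>' A' t' \<alpha>' nn' r' B' \<longrightarrow>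
        (\<forall>i<s. \<forall>i'<s'. \<gamma> i = \<gamma>' i' \<longrightarrow> A i = A' i')"
  proof (intro allI impI)
    fix s' \<gamma>' A' t' \<alpha>' nn' r' B' i i'
    assume ff': "fine_frobenius M s' \<gamma>' A' t' \<alpha>' nn' r' B'" and i: "i<s" and i': "i'<s'" and g: "\<gamma> i = \<gamma>' i'"
    interpret E': fvec_r "ext_mat M" s' "\<lambda>i. to_ac (\<gamma>' i)" "\<lambda>i. ext_mat (A' i)" t' "\<lambda>j. to_ac (\<alpha>' j)"
      "\<lambda>j. to_ac (nn' j)" "\<lambda>j. ext_mat (B' j)" r'
      by (rule ff_fvec_r[OF ff' char])
    have "ext_mat (A i) = ext_mat (A' i')"
    proof (rule E.eq_on_eig)
      fix v \<mu> assume ev: "ext_mat M *v v = \<mu> *s v"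
      show "ext_mat (A i) *v v = ext_mat (A' i') *v v" using E.A_eig[OF ev i] E'.A_eig[OF ev i'] g by simp
    qed
    then show "A i = A' i'" by (simp add: ext_mat_inj)
  qed
  have d1: "\<forall>j<t. (\<forall>v \<in> eigenspace (ext_mat M) (to_ac (\<alpha> j) + r j). ext_mat (B j) *v v = r j *s v) \<and>
            (\<forall>v \<in> eigenspace (ext_mat M) (to_ac (\<alpha> j) - r j). ext_mat (B j) *v v = (- r j) *s v) \<and>
            (\<forall>\<mu>. is_eigenvalue (ext_mat M) \<mu> \<and> \<mu> \<noteq> to_ac (\<alpha> j) + r j \<and> \<mu> \<noteq> to_ac (\<alpha> j) - r j \<longrightarrow>
                 (\<forall>v \<in> eigenspace (ext_mat M) \<mu>. ext_mat (B j) *v v = 0))"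
  proof (intro allI impI conjI ballI)
    fix j v assume j: "j<t" and v: "v \<in> eigenspace (ext_mat M) (to_ac (\<alpha> j) + r j)"
    then show "ext_mat (B j) *v v = r j *s v" using E.B_eig_p[of v j] by (simp add: eigsp)
  next
    fix j v assume j: "j<t" and v: "v \<in> eigenspace (ext_mat M) (to_ac (\<alpha> j) - r j)"
    then show "ext_mat (B j) *v v = (- r j) *s v" using E.B_eig_m[of v j] by (simp add: eigsp)
  next
    fix j \<mu> v assume j: "j<t" and mu: "is_eigenvalue (ext_mat M) \<mu> \<and> \<mu> \<noteq> to_ac (\<alpha> j) + r j \<and> \<mu> \<noteq> to_ac (\<alpha> j) - r j"
      and v: "v \<in> eigenspace (ext_mat M) \<mu>"
    show "ext_mat (B j) *v v = 0" using E.B_eig_ne[of v \<mu> j] j mu v by (simp add: eigsp)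
  qed
  have d2: "\<forall>s' \<gamma>' A' t' \<alpha>' nn' r' B'. fine_frobenius M s' \<gamma>' A' t' \<alpha>' nn' r' B' \<longrightarrow>
        (\<forall>j<t. \<forall>j'<t'.
           (to_ac (\<alpha> j) + r j = to_ac (\<alpha>' j') + r' j' \<or> to_ac (\<alpha> j) + r j = to_ac (\<alpha>' j') - r' j')
           \<longrightarrow> B j = B' j')"
  proof (intro allI impI)
    fix s' \<gamma>' A' t' \<alpha>' nn' r' B' j j'
    assume ff': "fine_frobenius M s' \<gamma>' A' t' \<alpha>' nn' r' B'" and j: "j<t" and j': "j'<t'"
      and h: "to_ac (\<alpha> j) + r j = to_ac (\<alpha>' j') + r' j' \<or> to_ac (\<alpha> j) + r j = to_ac (\<alpha>' j') - r' j'"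
    interpret E': fvec_r "ext_mat M" s' "\<lambda>i. to_ac (\<gamma>' i)" "\<lambda>i. ext_mat (A' i)" t' "\<lambda>j. to_ac (\<alpha>' j)"
      "\<lambda>j. to_ac (nn' j)" "\<lambda>j. ext_mat (B' j)" r'
      by (rule ff_fvec_r[OF ff' char])
    have nr': "r' j' \<notin> range to_ac" and r2': "r' j' ^ 2 = - to_ac (nn' j')" using ffD3[OF ff'] j' by auto
    have nrm: "- r' j' \<notin> range to_ac"
    proof
      assume "- r' j' \<in> range to_ac"
      then obtain c where "- r' j' = to_ac c" by blast
      then have "r' j' = to_ac (- c)" by (simp add: minus_equation_iff)
      with nr' show False by blast
    qed
    have rj2: "r j ^ 2 = to_ac (- nn j)" using r2[OF j] by simp
    have pmj: "to_ac (\<alpha> j) + r j \<noteq> to_ac (\<alpha> j) - r j" by (rule E.pm_self[OF j])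
    have "ext_mat (B j) = ext_mat (B' j')"
    proof (rule E.eq_on_eig)
      fix v \<mu> assume ev: "ext_mat M *v v = \<mu> *s v"
      from h show "ext_mat (B j) *v v = ext_mat (B' j') *v v"
      proof
        assume h1: "to_ac (\<alpha> j) + r j = to_ac (\<alpha>' j') + r' j'"
        then have dd: "r j - r' j' = to_ac (\<alpha>' j' - \<alpha> j)" by (simp add: algebra_simps)
        have r2'': "r' j' ^ 2 = to_ac (- nn' j')" using r2' by simp
        have "\<alpha>' j' - \<alpha> j = 0" by (rule conj_eq[OF nr' rj2 r2'' dd ch2])
        then have aa: "\<alpha>' j' = \<alpha> j" and rr: "r' j' = r j" using h1 by auto
        show ?thesis using E.B_eig[OF ev j] E'.B_eig[OF ev j'] aa rr by simp
      next
        assume h2: "to_ac (\<alpha> j) + r j = to_ac (\<alpha>' j') - r' j'"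
        then have dd: "r j - (- r' j') = to_ac (\<alpha>' j' - \<alpha> j)" by (simp add: algebra_simps)
        have r2'': "(- r' j') ^ 2 = to_ac (- nn' j')" using r2' by simp
        have "\<alpha>' j' - \<alpha> j = 0" by (rule conj_eq[OF nrm rj2 r2'' dd ch2])
        then have aa: "\<alpha>' j' = \<alpha> j" and rr: "r' j' = - r j" using h2 by auto
        show ?thesis using E.B_eig[OF ev j] E'.B_eig[OF ev j'] aa rr pmj by auto
      qed
    qed
    then show "B j = B' j'" by (simp add: ext_mat_inj)
  qed
  have e1: "\<forall>j<t. alg_degree (to_ac (\<alpha> j) + r j) = 2 \<and>
            map_poly to_ac (alg_min_poly (to_ac (\<alpha> j) + r j)) =
              [:- (to_ac (\<alpha> j) + r j), 1:] * [:- (to_ac (\<alpha> j) - r j), 1:] \<and>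
            \<alpha> j = H_K (to_ac (\<alpha> j) + r j) \<and>
            to_ac (nn j) = - (V_K (to_ac (\<alpha> j) + r j) ^ 2)"
  proof (intro allI impI conjI)
    fix j assume j: "j<t"
    have mp: "alg_min_poly (to_ac (\<alpha> j) + r j) = [:\<alpha> j ^ 2 + nn j, - 2 * \<alpha> j, 1:]"
      by (rule alg_min_quad[OF r2[OF j] nr[OF j]])
    show dg: "alg_degree (to_ac (\<alpha> j) + r j) = 2" by (simp add: alg_degree_def mp)
    show "map_poly to_ac (alg_min_poly (to_ac (\<alpha> j) + r j)) =
              [:- (to_ac (\<alpha> j) + r j), 1:] * [:- (to_ac (\<alpha> j) - r j), 1:]"
      unfolding mp using r2[OF j] by (simp add: map_ac_pCons power2_eq_square algebra_simps)
    show hk: "\<alpha> j = H_K (to_ac (\<alpha> j) + r j)"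
      using ch2 by (simp add: H_K_def dg mp)
    show "to_ac (nn j) = - (V_K (to_ac (\<alpha> j) + r j) ^ 2)"
      using r2[OF j] by (simp add: V_K_def hk[symmetric])
  qed
  have e2: "splitting_bound M \<le> 2" by (rule split_bound[OF K.q0_ann])
  show ?thesis
    by (intro conjI; (fact a1 a2 a3 a4 b1 b2 b3 b4 b5 c1 c2 d1 d2 e1 e2)?)
qed

end
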